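(* Let $T$ be a measure-preserving automorphism of a Lebesgue space $(X,p)$ having a binomial generator. Then there is a central measure $\mu$ on $\mathcal T(\mathrm{OP})$ such that the adic transformation $\mathcal A$ on $(\mathcal T(\mathrm{OP}),\mu)$ is metrically isomorphic to the transformation $T\times\mathbb O$ on $(X\times I^{\mathbb N},p\times m)$.
   Context: Let $I=\{0,1\}$. The graded graph $\mathrm{OP}$ has vertex sets $\mathrm{OP}_0=I$, $\mathrm{OP}_{n+1}=\mathrm{OP}_n\times\mathrm{OP}_n$; for $v=(v_0,v_1)\in\mathrm{OP}_{n+1}$ there is an edge of index $0$ from $v_0$ to $v$ and an edge of index $1$ from $v_1$ to $v$ (two distinct edges if $v_0=v_1$), and no other edges. $\mathcal T(\mathrm{OP})$ is the compact space of infinite paths $(v_0,e_0,v_1,e_1,\dots)$ starting at floor $0$ (topology generated by cylinder sets). The adic transformation $\mathcal A$ is defined on paths having an edge of index $0$: if $e_n$ is the first such edge of $x$, then $\mathcal Ax$ coincides with $x$ from floor $n+1$ on, its edge from floor $n$ to floor $n+1$ has index $1$, and its edges below floor $n$ all have index $0$. A central measure is a Borel probability measure on $\mathcal T(\mathrm{OP})$ such that, for each $n$, conditionally on the part of a path above floor $n$, all initial segments up to floor $n$ compatible with it are equiprobable (equivalently, a Borel probability measure invariant under $\mathcal A$). A binomial generator of $T$ is a measurable partition of $X$ into two sets whose images under all $T^k$, $k\in\mathbb Z$, generate the sigma-algebra mod 0. $I^{\mathbb N}$ is the space of $0$–$1$ sequences $(\alpha_i)_{i\ge1}$, $m$ is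 the uniform Bernoulli (Lebesgue) measure on it, and $\mathbb O$ is the odometer: if $\alpha_1=\dots=\alpha_{n-1}=1$, $\alpha_n=0$, then $\mathbb O[\alpha]_i=0$ for $i<n$, $\mathbb O[\alpha]_n=1$, $\mathbb O[\alpha]_i=\alpha_i$ for $i>n$ (defined $m$-a.e.). *)

theory Defs
  imports "HOL-Probability.Probability"
begin

text \<open>A vertex of floor n of OP is encoded as a 0-1 list of length 2^n:
  OP_0 = I (lists of length 1), and the pair (v0,v1) in OP_(n+1) = OP_n x OP_n
  is encoded as the concatenation v0 @ v1.  An edge of index i (False = 0,
  True = 1) from floor n to a vertex v of floor n+1 starts at the i-th
  component of v.  A path (v_0,e_0,v_1,e_1,...) is encoded by the pair of
  its vertex sequence and its edge-index sequence (an edge is determined by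
  its index and its upper end).\<close>

type_synonym op_path = "(nat \<Rightarrow> bool list) \<times> (nat \<Rightarrow> bool)"

definition OP_vertex :: "nat \<Rightarrow> bool list \<Rightarrow> bool" where
  "OP_vertex n w \<longleftrightarrow> length w = 2 ^ n"

definition OP_component :: "bool \<Rightarrow> nat \<Rightarrow> bool list \<Rightarrow> bool list" where
  "OP_component i n w = (if i then drop (2 ^ n) w else take (2 ^ n) w)"

definition OP_paths :: "op_path set" where
  "OP_paths = {x. \<forall>n. OP_vertex n (fst x n) \<and>
                      fst x n = OP_component (snd x n) n (fst x (Suc n))}"

definition OP_cyl_gen :: "op_path set set" where
  "OP_cyl_gen = (\<Union>k. \<Union>w. {OP_paths \<inter> {x. fst x k = w}}) \<union>
                (\<Union>k. \<Union>b. {OP_paths \<inter> {x. snd x k = b}})"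

definition TOP :: "op_path measure" where
  "TOP = sigma OP_paths OP_cyl_gen"

text \<open>The adic transformation (set to the identity on the null set of paths
  without any edge of index 0, where it is undefined).\<close>
definition adic :: "op_path \<Rightarrow> op_path" where
  "adic x = (if \<exists>n. \<not> snd x n then
     (let n = LEAST n. \<not> snd x n in
       (\<lambda>k. if k \<le> n then take (2 ^ k) (drop (2 ^ n) (fst x (Suc n))) else fst x k,
        \<lambda>k. if k < n then False else if k = n then True else snd x k))
   else x)"

text \<open>Replacing the initial segment (up to floor n) of a path by the one with
  edge indices c_0..c_(n-1) ending at the same vertex at floor n.\<close>
definition OP_offset :: "bool list \<Rightarrow> nat \<Rightarrow> nat \<Rightarrow> nat" where
  "OP_offset c k n = (\<Sum>j\<in>{k..<n}. if c ! j then 2 ^ j else 0)"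

definition OP_replace :: "nat \<Rightarrow> bool list \<Rightarrow> op_path \<Rightarrow> op_path" where
  "OP_replace n c x =
     (\<lambda>k. if k < n then take (2 ^ k) (drop (OP_offset c k n) (fst x n)) else fst x k,
      \<lambda>k. if k < n then c ! k else snd x k)"

definition OP_swap :: "nat \<Rightarrow> bool list \<Rightarrow> bool list \<Rightarrow> op_path \<Rightarrow> op_path" where
  "OP_swap n a b x =
     (if map (snd x) [0..<n] = a then OP_replace n b x
      else if map (snd x) [0..<n] = b then OP_replace n a x
      else x)"

text \<open>Central measure: a Borel probability measure on T(OP) such that, for each
  n, conditionally on the part of a path above floor n, all initial segments
  up to floor n are equiprobable; equivalently, the measure is invariant
  under every exchange of two initial segments up to floor n.\<close>
definition central_measure :: "op_path measure \<Rightarrow> bool" where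
  "central_measure \<mu> \<longleftrightarrow> prob_space \<mu> \<and> sets \<mu> = sets TOP \<and>
     (\<forall>n a b. length a = n \<and> length b = n \<longrightarrow>
        OP_swap n a b \<in> \<mu> \<rightarrow>\<^sub>M \<mu> \<and> distr \<mu> \<mu> (OP_swap n a b) = \<mu>)"

definition measure_preserving_map :: "'a measure \<Rightarrow> 'b measure \<Rightarrow> ('a \<Rightarrow> 'b) \<Rightarrow> bool" where
  "measure_preserving_map M N f \<longleftrightarrow> f \<in> M \<rightarrow>\<^sub>M N \<and> distr M N f = N"

definition mp_automorphism :: "'a measure \<Rightarrow> ('a \<Rightarrow> 'a) \<Rightarrow> bool" where
  "mp_automorphism M T \<longleftrightarrow> measure_preserving_map M M T \<and>
     (\<exists>T'. measure_preserving_map M M T' \<and>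
        (AE x in M. T' (T x) = x) \<and> (AE x in M. T (T' x) = x))"

text \<open>P and its complement form a binomial generator: the sets T^k P, k in Z,
  generate the sigma-algebra mod 0.  Here T' is an inverse of T (mod 0), so the
  sets T^k P for k \<le> 0 are the preimages under T^j and for k \<ge> 0 the
  preimages under T'^j.\<close>
definition binomial_generator :: "'a measure \<Rightarrow> ('a \<Rightarrow> 'a) \<Rightarrow> 'a set \<Rightarrow> bool" where
  "binomial_generator M T P \<longleftrightarrow> P \<in> sets M \<and>
     (\<exists>T'. measure_preserving_map M M T' \<and>
        (AE x in M. T' (T x) = x) \<and> (AE x in M. T (T' x) = x) \<and>
        (\<forall>B\<in>sets M. \<exists>C\<in>sigma_sets (space M)
              ((\<Union>j. {{x\<in>space M. (T ^^ j) x \<in> P}}) \<union> (\<Union>j. {{x\<in>space M. (T' ^^ j) x \<in> P}})).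
            emeasure M ((B - C) \<union> (C - B)) = 0))"

definition metrically_isomorphic ::
  "'a measure \<Rightarrow> ('a \<Rightarrow> 'a) \<Rightarrow> 'b measure \<Rightarrow> ('b \<Rightarrow> 'b) \<Rightarrow> bool" where
  "metrically_isomorphic M S N T \<longleftrightarrow>
     (\<exists>\<phi> \<psi> A B. A \<in> sets M \<and> B \<in> sets N \<and>
        emeasure M (space M - A) = 0 \<and> emeasure N (space N - B) = 0 \<and>
        measure_preserving_map M N \<phi> \<and> measure_preserving_map N M \<psi> \<and>
        (\<forall>x\<in>A. \<phi> x \<in> B \<and> \<psi> (\<phi> x) = x \<and> \<phi> (S x) = T (\<phi> x)) \<and>
        (\<forall>y\<in>B. \<psi> y \<in> A \<and> \<phi> (\<psi> y) = y))"

text \<open>Uniform Bernoulli measure m on 0-1 sequences (indexed from 0 here).\<close>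
definition bernoulli_seq :: "(nat \<Rightarrow> bool) measure" where
  "bernoulli_seq = PiM UNIV (\<lambda>_. measure_pmf (bernoulli_pmf (1/2)))"

definition odometer :: "(nat \<Rightarrow> bool) \<Rightarrow> (nat \<Rightarrow> bool)" where
  "odometer \<alpha> = (if \<exists>n. \<not> \<alpha> n then
     (let n = LEAST n. \<not> \<alpha> n in (\<lambda>i. if i < n then False else if i = n then True else \<alpha> i))
   else \<alpha>)"

end

theory Submission
  imports Defs
begin


lemma OP_cyl_gen_Pow: "OP_cyl_gen \<subseteq> Pow OP_paths"
  unfolding OP_cyl_gen_def by auto

lemma space_TOP[simp]: "space TOP = OP_paths"
  unfolding TOP_def using OP_cyl_gen_Pow by (simp add: space_measure_of)

lemma sets_TOP: "sets TOP = sigma_sets OP_paths OP_cyl_gen"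
  unfolding TOP_def using OP_cyl_gen_Pow by (simp add: sets_measure_of)

lemma fst_cyl_sets: "{x \<in> OP_paths. fst x k = w} \<in> sets TOP"
proof -
  have "OP_paths \<inter> {x. fst x k = w} \<in> OP_cyl_gen" unfolding OP_cyl_gen_def by blast
  then have "OP_paths \<inter> {x. fst x k = w} \<in> sets TOP" unfolding sets_TOP by (rule sigma_sets.Basic)
  moreover have "{x \<in> OP_paths. fst x k = w} = OP_paths \<inter> {x. fst x k = w}" by blast
  ultimately show ?thesis by simp
qed

lemma snd_cyl_sets: "{x \<in> OP_paths. snd x k = w} \<in> sets TOP"
proof -
  have "OP_paths \<inter> {x. snd x k = w} \<in> OP_cyl_gen" unfolding OP_cyl_gen_def by blast
  then have "OP_paths \<inter> {x. snd x k = w} \<in> sets TOP" unfolding sets_TOP by (rule sigma_sets.Basic)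
  moreover have "{x \<in> OP_paths. snd x k = w} = OP_paths \<inter> {x. snd x k = w}" by blast
  ultimately show ?thesis by simp
qed

lemma meas_fst_TOP[measurable]: "(\<lambda>x. fst x k) \<in> TOP \<rightarrow>\<^sub>M count_space UNIV"
  unfolding measurable_count_space_eq2_countable
  using fst_cyl_sets[of k] by (auto simp: vimage_def Int_def conj_commute)

lemma meas_snd_TOP[measurable]: "(\<lambda>x. snd x k) \<in> TOP \<rightarrow>\<^sub>M count_space UNIV"
  unfolding measurable_count_space_eq2_countable
  using snd_cyl_sets[of k] by (auto simp: vimage_def Int_def conj_commute)

lemma measurable_TOPI:
  assumes "\<And>x. x \<in> space M \<Longrightarrow> f x \<in> OP_paths"
    and "\<And>k. (\<lambda>x. fst (f x) k) \<in> M \<rightarrow>\<^sub>M count_space UNIV"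
    and "\<And>k. (\<lambda>x. snd (f x) k) \<in> M \<rightarrow>\<^sub>M count_space UNIV"
  shows "f \<in> M \<rightarrow>\<^sub>M TOP"
  unfolding TOP_def
proof (rule measurable_measure_of)
  show "f \<in> space M \<rightarrow> OP_paths" using assms(1) by auto
  show "OP_cyl_gen \<subseteq> Pow OP_paths" by (rule OP_cyl_gen_Pow)
  fix A assume "A \<in> OP_cyl_gen"
  then consider k w where "A = OP_paths \<inter> {x. fst x k = w}" | k w where "A = OP_paths \<inter> {x. snd x k = w}"
    unfolding OP_cyl_gen_def by blast
  then show "f -` A \<inter> space M \<in> sets M"
  proof cases
    case 1
    have "f -` A \<inter> space M = (\<lambda>x. fst (f x) k) -` {w} \<inter> space M" using 1 assms(1) by auto
    then show ?thesis using measurable_sets[OF assms(2)[of k], of "{w}"] by simp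
  next
    case 2
    have "f -` A \<inter> space M = (\<lambda>x. snd (f x) k) -` {w} \<inter> space M" using 2 assms(1) by auto
    then show ?thesis using measurable_sets[OF assms(3)[of k], of "{w}"] by simp
  qed
qed

lemma cs_comp: "f \<in> M \<rightarrow>\<^sub>M count_space UNIV \<Longrightarrow> (\<lambda>x. g (f x)) \<in> M \<rightarrow>\<^sub>M count_space UNIV"
  by (rule measurable_compose[OF _ measurable_count_space])

lemma cs_pair:
  fixes f :: "'a \<Rightarrow> 'b::countable" and g :: "'a \<Rightarrow> 'c::countable"
  assumes "f \<in> M \<rightarrow>\<^sub>M count_space UNIV" "g \<in> M \<rightarrow>\<^sub>M count_space UNIV"
  shows "(\<lambda>x. (f x, g x)) \<in> M \<rightarrow>\<^sub>M count_space UNIV"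
proof -
  have "\<And>i. (\<lambda>x. (i, g x)) \<in> M \<rightarrow>\<^sub>M count_space UNIV"
    using cs_comp[OF assms(2)] .
  from measurable_compose_countable[where f="\<lambda>i x. (i, g x)", OF this assms(1)]
  show ?thesis .
qed

lemma cs_map:
  fixes f :: "nat \<Rightarrow> 'a \<Rightarrow> 'b::countable"
  assumes "\<And>i. f i \<in> M \<rightarrow>\<^sub>M count_space UNIV"
  shows "(\<lambda>x. map (\<lambda>i. f i x) xs) \<in> M \<rightarrow>\<^sub>M count_space UNIV"
proof (induction xs)
  case Nil then show ?case by simp
next
  case (Cons a xs)
  have "(\<lambda>x. (f a x, map (\<lambda>i. f i x) xs)) \<in> M \<rightarrow>\<^sub>M count_space UNIV"
    by (rule cs_pair[OF assms Cons])
  from cs_comp[OF this, of "\<lambda>(u,v). u # v"] show ?case by simp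
qed


abbreviation "BM \<equiv> measure_pmf (bernoulli_pmf (1/2))"

lemma bs_space[simp]: "space bernoulli_seq = UNIV"
  unfolding bernoulli_seq_def by (simp add: space_PiM)

lemma bs_prob: "prob_space bernoulli_seq"
  unfolding bernoulli_seq_def by (rule prob_space_PiM) (simp add: prob_space_measure_pmf)

lemma bs_ppspace: "product_prob_space (\<lambda>_::nat. BM)"
proof -
  interpret prob_space BM by (rule prob_space_measure_pmf)
  show ?thesis ..
qed

lemma bs_coord[measurable]: "(\<lambda>\<alpha>. \<alpha> i) \<in> bernoulli_seq \<rightarrow>\<^sub>M count_space UNIV"
proof -
  have "(\<lambda>\<alpha>. \<alpha> i) \<in> bernoulli_seq \<rightarrow>\<^sub>M BM"
    unfolding bernoulli_seq_def by (rule measurable_component_singleton) simp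
  moreover have "sets BM = sets (count_space UNIV)" by simp
  ultimately show ?thesis using measurable_cong_sets[OF refl, of BM "count_space UNIV" bernoulli_seq] by simp
qed

definition cyl :: "bool list \<Rightarrow> (nat \<Rightarrow> bool) set" where
  "cyl c = {\<alpha>. map \<alpha> [0..<length c] = c}"

lemma cyl_iff: "\<alpha> \<in> cyl c \<longleftrightarrow> (\<forall>i<length c. \<alpha> i = c ! i)"
  unfolding cyl_def list_eq_iff_nth_eq by simp

lemma emeasure_cyl: "emeasure bernoulli_seq (cyl c) = ennreal ((1/2) ^ length c)"
proof -
  interpret product_prob_space "\<lambda>_::nat. BM" UNIV by (rule bs_ppspace)
  have "emeasure (Pi\<^sub>M UNIV (\<lambda>_. BM)) {x\<in>space (Pi\<^sub>M UNIV (\<lambda>_. BM)). \<forall>i\<in>{..<length c}. x i \<in> {c ! i}}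
      = (\<Prod>i\<in>{..<length c}. emeasure BM {c ! i})"
    by (rule emeasure_PiM_Collect) auto
  also have "\<dots> = (\<Prod>i\<in>{..<length c}. ennreal (1/2))"
    by (simp add: emeasure_pmf_single)
  also have "\<dots> = ennreal (\<Prod>i\<in>{..<length c}. 1/2)"
    by (rule prod_ennreal) simp
  also have "\<dots> = ennreal ((1/2) ^ length c)"
    by simp
  finally have *: "emeasure bernoulli_seq {x. \<forall>i\<in>{..<length c}. x i = c ! i} = ennreal ((1/2) ^ length c)"
    unfolding bernoulli_seq_def[symmetric] by simp
  have "cyl c = {x. \<forall>i\<in>{..<length c}. x i = c ! i}" by (auto simp: cyl_iff)
  then show ?thesis using * by simp
qed

lemma cyl_sets[measurable]: "cyl c \<in> sets bernoulli_seq"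
proof -
  have "cyl c = (\<lambda>\<alpha>. map (\<lambda>i. \<alpha> i) [0..<length c]) -` {c} \<inter> space bernoulli_seq"
    by (auto simp: cyl_def)
  also have "\<dots> \<in> sets bernoulli_seq"
    by (rule measurable_sets[OF cs_map]) (auto intro: bs_coord)
  finally show ?thesis .
qed

lemma bs_sets: "sets bernoulli_seq = sigma_sets UNIV {{f. f i \<in> A} | i A. True}"
  unfolding bernoulli_seq_def sets_PiM_single by simp

lemma finite_bool_lists: "finite {c :: bool list. length c = N}"
  using finite_lists_length_eq[of "UNIV :: bool set" N] by simp

definition genE :: "nat \<Rightarrow> (nat \<Rightarrow> bool) set set" where
  "genE n = {cyl c | c. n \<le> length c} \<union> {{}}"

lemma cyl_coord: "{f :: nat \<Rightarrow> bool. f i \<in> A} = (\<Union>c\<in>{c. length c = max n (Suc i) \<and> c ! i \<in> A}. cyl c)"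
proof (intro set_eqI iffI)
  fix f :: "nat \<Rightarrow> bool" assume "f \<in> {f. f i \<in> A}"
  then show "f \<in> (\<Union>c\<in>{c. length c = max n (Suc i) \<and> c ! i \<in> A}. cyl c)"
    by (intro UN_I[of "map f [0..<max n (Suc i)]"]) (auto simp: cyl_iff nth_map_upt)
next
  fix f :: "nat \<Rightarrow> bool" assume "f \<in> (\<Union>c\<in>{c. length c = max n (Suc i) \<and> c ! i \<in> A}. cyl c)"
  then obtain c where "length c = max n (Suc i)" "c ! i \<in> A" "f \<in> cyl c" by blast
  then show "f \<in> {f. f i \<in> A}" by (auto simp: cyl_iff)
qed

lemma bs_sets_genE: "sets bernoulli_seq = sigma_sets UNIV (genE n)"
proof (rule antisym)
  have sa: "sigma_algebra UNIV (sigma_sets UNIV (genE n))"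
    by (rule sigma_algebra_sigma_sets) simp
  interpret sa: sigma_algebra UNIV "sigma_sets UNIV (genE n)" by (rule sa)
  have "{{f. f i \<in> A} | i A. True} \<subseteq> sigma_sets UNIV (genE n)"
  proof safe
    fix i and A :: "bool set"
    have "\<forall>c\<in>{c. length c = max n (Suc i) \<and> c ! i \<in> A}. cyl c \<in> sigma_sets UNIV (genE n)"
      by (auto simp: genE_def intro!: sigma_sets.Basic)
    moreover have "finite {c. length c = max n (Suc i) \<and> c ! i \<in> A}"
      by (rule finite_subset[OF _ finite_bool_lists[of "max n (Suc i)"]]) auto
    ultimately have "(\<Union>c\<in>{c. length c = max n (Suc i) \<and> c ! i \<in> A}. cyl c) \<in> sigma_sets UNIV (genE n)"
      using sa.finite_UN by blast
    then show "{f. f i \<in> A} \<in> sigma_sets UNIV (genE n)" by (simp only: cyl_coord[of i A n])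
  qed
  then show "sets bernoulli_seq \<subseteq> sigma_sets UNIV (genE n)"
    unfolding bs_sets by (rule sigma_sets_mono)
  have "genE n \<subseteq> sets bernoulli_seq" unfolding genE_def by auto
  from sets.sigma_sets_subset[OF this] show "sigma_sets UNIV (genE n) \<subseteq> sets bernoulli_seq" by simp
qed

lemma all_split_nat: "(\<forall>i<(m::nat). P i) \<longleftrightarrow> (\<forall>i<n. P i) \<and> (\<forall>i. n \<le> i \<and> i < m \<longrightarrow> P i)" if "n \<le> m"
proof
  assume "\<forall>i<m. P i" then show "(\<forall>i<n. P i) \<and> (\<forall>i. n \<le> i \<and> i < m \<longrightarrow> P i)" using that by auto
next
  assume a: "(\<forall>i<n. P i) \<and> (\<forall>i. n \<le> i \<and> i < m \<longrightarrow> P i)"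
  show "\<forall>i<m. P i"
  proof (intro allI impI)
    fix i assume "i < m" then show "P i" using a by (cases "i < n") auto
  qed
qed

lemma cyl_split: "n \<le> length c \<Longrightarrow> \<alpha> \<in> cyl c \<longleftrightarrow> map \<alpha> [0..<n] = take n c \<and> (\<forall>i. n \<le> i \<and> i < length c \<longrightarrow> \<alpha> i = c ! i)"
proof -
  assume n: "n \<le> length c"
  have "map \<alpha> [0..<n] = take n c \<longleftrightarrow> (\<forall>i<n. \<alpha> i = c ! i)" using n by (simp add: list_eq_iff_nth_eq)
  then show ?thesis unfolding cyl_iff using all_split_nat[OF n, of "\<lambda>i. \<alpha> i = c ! i"] by simp
qed

lemma cyl_Int: "length c \<le> length d \<Longrightarrow> cyl c \<inter> cyl d = (if take (length c) d = c then cyl d else {})"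
proof -
  assume le: "length c \<le> length d"
  have "\<alpha> \<in> cyl c \<inter> cyl d \<longleftrightarrow> \<alpha> \<in> (if take (length c) d = c then cyl d else {})" for \<alpha>
  proof -
    have eq: "take (length c) d = c \<longleftrightarrow> (\<forall>i<length c. d ! i = c ! i)" using le by (simp add: list_eq_iff_nth_eq)
    show ?thesis
    proof (cases "take (length c) d = c")
      case True
      then show ?thesis using eq le by (auto simp: cyl_iff)
    next
      case False
      then obtain i where "i < length c" "d ! i \<noteq> c ! i" using eq by auto
      then show ?thesis using le False by (auto simp: cyl_iff)
    qed
  qed
  then show ?thesis by blast
qed

lemma genE_Int_stable: "Int_stable (genE n)"
  unfolding Int_stable_def
proof (intro ballI)
  fix a b assume a: "a \<in> genE n" and b: "b \<in> genE n"
  show "a \<inter> b \<in> genE n"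
  proof (cases "a = {} \<or> b = {}")
    case True then show ?thesis by (auto simp: genE_def)
  next
    case False
    then obtain c d where c: "a = cyl c" "n \<le> length c" and d: "b = cyl d" "n \<le> length d"
      using a b by (auto simp: genE_def)
    show ?thesis
    proof (cases "length c \<le> length d")
      case True then show ?thesis using cyl_Int[OF True] c d by (auto simp: genE_def)
    next
      case False then have ld: "length d \<le> length c" by simp
      show ?thesis using cyl_Int[OF ld] c d by (auto simp: genE_def Int_commute)
    qed
  qed
qed

lemma bs_measurableI:
  assumes "\<And>i. (\<lambda>x. f x i) \<in> M \<rightarrow>\<^sub>M count_space UNIV"
  shows "f \<in> M \<rightarrow>\<^sub>M bernoulli_seq"
  unfolding bernoulli_seq_def
proof (rule measurable_PiM_single')
  fix i
  have eq: "measurable M (count_space UNIV) = measurable M BM" by (rule measurable_cong_sets) simp_all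
  show "(\<lambda>\<omega>. f \<omega> i) \<in> M \<rightarrow>\<^sub>M BM"
    using assms[of i] unfolding eq .
qed (simp add: space_PiM)

definition swp :: "'b \<Rightarrow> 'b \<Rightarrow> 'b \<Rightarrow> 'b" where
  "swp a b q = (if q = a then b else if q = b then a else q)"

lemma swp_inv: "a \<noteq> b \<Longrightarrow> swp a b q = t \<longleftrightarrow> q = swp a b t"
  unfolding swp_def by auto

definition sw :: "nat \<Rightarrow> bool list \<Rightarrow> bool list \<Rightarrow> (nat \<Rightarrow> bool) \<Rightarrow> (nat \<Rightarrow> bool)" where
  "sw n a b \<alpha> = (\<lambda>i. if i < n then swp a b (map \<alpha> [0..<n]) ! i else \<alpha> i)"

definition swc :: "nat \<Rightarrow> bool list \<Rightarrow> bool list \<Rightarrow> bool list \<Rightarrow> bool list" where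
  "swc n a b c = swp a b (take n c) @ drop n c"

lemma length_swp_gen: "length a = n \<Longrightarrow> length b = n \<Longrightarrow> length q = n \<Longrightarrow> length (swp a b q) = n"
  unfolding swp_def by simp

lemma map_upd_prefix: "length c = n \<Longrightarrow> map (\<lambda>i. if i < n then c ! i else \<alpha> i) [0..<n] = c"
  by (simp add: list_eq_iff_nth_eq)

lemma map_sw: "length a = n \<Longrightarrow> length b = n \<Longrightarrow> map (sw n a b \<alpha>) [0..<n] = swp a b (map \<alpha> [0..<n])"
  unfolding sw_def by (rule map_upd_prefix) (rule length_swp_gen, simp_all)

lemma sw_high: "n \<le> i \<Longrightarrow> sw n a b \<alpha> i = \<alpha> i"
  unfolding sw_def by simp

lemma sw_same: "sw n a a \<alpha> = \<alpha>"
proof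
  fix i
  have "swp a a q = q" for q :: "bool list" unfolding swp_def by simp
  then show "sw n a a \<alpha> i = \<alpha> i" unfolding sw_def by (simp add: nth_map_upt)
qed

lemma length_swp: "length a = n \<Longrightarrow> length b = n \<Longrightarrow> n \<le> length c \<Longrightarrow> length (swp a b (take n c)) = n"
  by (rule length_swp_gen) simp_all

lemma sw_vimage_cyl:
  assumes a: "length a = n" and b: "length b = n" and ab: "a \<noteq> b" and c: "n \<le> length c"
  shows "sw n a b -` cyl c = cyl (swc n a b c)"
proof -
  have ls: "length (swp a b (take n c)) = n" using length_swp[OF a b c] .
  have lc: "length (swc n a b c) = length c" unfolding swc_def using ls c by simp
  have tk: "take n (swc n a b c) = swp a b (take n c)" unfolding swc_def using ls by simp
  have nth: "swc n a b c ! i = c ! i" if "n \<le> i" for i unfolding swc_def using ls that c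
    by (simp add: nth_append)
  show ?thesis
  proof (intro set_eqI)
    fix \<alpha>
    have "\<alpha> \<in> sw n a b -` cyl c \<longleftrightarrow> sw n a b \<alpha> \<in> cyl c" by simp
    also have "\<dots> \<longleftrightarrow> swp a b (map \<alpha> [0..<n]) = take n c \<and> (\<forall>i. n \<le> i \<and> i < length c \<longrightarrow> \<alpha> i = c ! i)"
      using cyl_split[OF c, of "sw n a b \<alpha>"] map_sw[OF a b] sw_high by simp
    also have "\<dots> \<longleftrightarrow> map \<alpha> [0..<n] = take n (swc n a b c) \<and> (\<forall>i. n \<le> i \<and> i < length (swc n a b c) \<longrightarrow> \<alpha> i = swc n a b c ! i)"
      using swp_inv[OF ab, of "map \<alpha> [0..<n]" "take n c"] tk lc nth by simp
    also have "\<dots> \<longleftrightarrow> \<alpha> \<in> cyl (swc n a b c)"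
      using cyl_split[of n "swc n a b c" \<alpha>] lc c by simp
    finally show "\<alpha> \<in> sw n a b -` cyl c \<longleftrightarrow> \<alpha> \<in> cyl (swc n a b c)" .
  qed
qed

lemma sw_measurable: "sw n a b \<in> bernoulli_seq \<rightarrow>\<^sub>M bernoulli_seq"
proof (rule bs_measurableI)
  fix i
  have m1: "(\<lambda>\<alpha>. (map \<alpha> [0..<n], \<alpha> i)) \<in> bernoulli_seq \<rightarrow>\<^sub>M count_space UNIV"
    using cs_pair[OF cs_map[OF bs_coord] bs_coord] by simp
  have "(\<lambda>\<alpha>. (\<lambda>(q, v). if i < n then swp a b q ! i else v) (map \<alpha> [0..<n], \<alpha> i)) \<in> bernoulli_seq \<rightarrow>\<^sub>M count_space UNIV"
    by (rule cs_comp[OF m1])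
  moreover have "(\<lambda>\<alpha>. sw n a b \<alpha> i) = (\<lambda>\<alpha>. (\<lambda>(q, v). if i < n then swp a b q ! i else v) (map \<alpha> [0..<n], \<alpha> i))"
    unfolding sw_def by simp
  ultimately show "(\<lambda>\<alpha>. sw n a b \<alpha> i) \<in> bernoulli_seq \<rightarrow>\<^sub>M count_space UNIV"
    by simp
qed

lemma sw_preserving:
  assumes a: "length a = n" and b: "length b = n"
  shows "distr bernoulli_seq bernoulli_seq (sw n a b) = bernoulli_seq"
proof (cases "a = b")
  case True
  then have "sw n a b = (\<lambda>x. x)" using sw_same by auto
  then show ?thesis by simp
next
  case ab: False
  show ?thesis
  proof (rule measure_eqI_generator_eq_countable[OF genE_Int_stable[of n], where \<Omega>=UNIV and A="cyl ` {c. length c = n}"])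
    show "genE n \<subseteq> Pow UNIV" by simp
    show "sets (distr bernoulli_seq bernoulli_seq (sw n a b)) = sigma_sets UNIV (genE n)"
      using bs_sets_genE by simp
    show "sets bernoulli_seq = sigma_sets UNIV (genE n)" by (rule bs_sets_genE)
    show "cyl ` {c. length c = n} \<subseteq> genE n" by (auto simp: genE_def)
    show "\<Union> (cyl ` {c. length c = n}) = UNIV"
    proof (intro set_eqI iffI)
      fix \<alpha> :: "nat \<Rightarrow> bool"
      show "\<alpha> \<in> \<Union> (cyl ` {c. length c = n})" by (intro UN_I[of "map \<alpha> [0..<n]"]) (auto simp: cyl_def)
    qed simp
    show "countable (cyl ` {c. length c = n})" using finite_bool_lists by (intro countable_image countable_finite)
    show "emeasure (distr bernoulli_seq bernoulli_seq (sw n a b)) X \<noteq> \<infinity>" for X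
      using finite_measure.emeasure_finite[OF prob_space.finite_measure[OF prob_space.prob_space_distr[OF bs_prob sw_measurable]]] by simp
  next
    fix X assume "X \<in> genE n"
    then consider "X = {}" | c where "X = cyl c" "n \<le> length c" unfolding genE_def by blast
    then show "emeasure (distr bernoulli_seq bernoulli_seq (sw n a b)) X = emeasure bernoulli_seq X"
    proof cases
      case 1 then show ?thesis by simp
    next
      case 2
      have "emeasure (distr bernoulli_seq bernoulli_seq (sw n a b)) X = emeasure bernoulli_seq (sw n a b -` X)"
        using 2 by (simp add: emeasure_distr sw_measurable)
      also have "\<dots> = emeasure bernoulli_seq (cyl (swc n a b c))" using 2 sw_vimage_cyl[OF a b ab] by simp
      also have "\<dots> = emeasure bernoulli_seq X"
        using 2 length_swp[OF a b] by (simp add: emeasure_cyl swc_def)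
      finally show ?thesis .
    qed
  qed
qed


lemma ennreal_le_pow_half: fixes x :: ennreal assumes "\<And>k. x \<le> ennreal ((1/2) ^ k)" shows "x = 0"
proof -
  have lim: "(\<lambda>k. ennreal ((1/2) ^ k)) \<longlonglongrightarrow> ennreal 0"
    by (rule tendsto_ennrealI) (rule LIMSEQ_power_zero, simp)
  have "x \<le> ennreal 0" by (rule LIMSEQ_le_const[OF lim]) (use assms in auto)
  then show ?thesis by simp
qed

lemma tail_const_sets: "{\<alpha> \<in> space bernoulli_seq. \<forall>i. n \<le> i \<longrightarrow> \<alpha> i = v} \<in> sets bernoulli_seq"
  by measurable

lemma tail_const_null: "emeasure bernoulli_seq {\<alpha> \<in> space bernoulli_seq. \<forall>i. n \<le> i \<longrightarrow> \<alpha> i = v} = 0"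
proof (rule ennreal_le_pow_half)
  fix k
  interpret product_prob_space "\<lambda>_::nat. BM" UNIV by (rule bs_ppspace)
  have "emeasure (Pi\<^sub>M UNIV (\<lambda>_. BM)) {x\<in>space (Pi\<^sub>M UNIV (\<lambda>_. BM)). \<forall>i\<in>{n..<n+k}. x i \<in> {v}}
      = (\<Prod>i\<in>{n..<n+k}. emeasure BM {v})"
    by (rule emeasure_PiM_Collect) auto
  also have "\<dots> = (\<Prod>i\<in>{n..<n+k}. ennreal (1/2))"
    by (simp add: emeasure_pmf_single)
  also have "\<dots> = ennreal (\<Prod>i\<in>{n..<n+k}. 1/2)"
    by (rule prod_ennreal) simp
  also have "\<dots> = ennreal ((1/2) ^ k)"
    by simp
  finally have eq: "emeasure bernoulli_seq {x \<in> space bernoulli_seq. \<forall>i\<in>{n..<n+k}. x i \<in> {v}} = ennreal ((1/2) ^ k)"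
    unfolding bernoulli_seq_def .
  have S: "{x \<in> space bernoulli_seq. \<forall>i\<in>{n..<n+k}. x i \<in> {v}} \<in> sets bernoulli_seq"
    by measurable
  have "emeasure bernoulli_seq {\<alpha> \<in> space bernoulli_seq. \<forall>i. n \<le> i \<longrightarrow> \<alpha> i = v}
     \<le> emeasure bernoulli_seq {x \<in> space bernoulli_seq. \<forall>i\<in>{n..<n+k}. x i \<in> {v}}"
    by (rule emeasure_mono[OF _ S]) auto
  then show "emeasure bernoulli_seq {\<alpha> \<in> space bernoulli_seq. \<forall>i. n \<le> i \<longrightarrow> \<alpha> i = v} \<le> ennreal ((1/2) ^ k)"
    using eq by simp
qed

definition inf01 :: "(nat \<Rightarrow> bool) \<Rightarrow> bool" where
  "inf01 \<alpha> \<longleftrightarrow> (\<forall>n. (\<exists>i\<ge>n. \<alpha> i) \<and> (\<exists>i\<ge>n. \<not> \<alpha> i))"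

lemma AE_inf01: "AE \<alpha> in bernoulli_seq. inf01 \<alpha>"
proof -
  have "AE \<alpha> in bernoulli_seq. \<not> (\<forall>i. n \<le> i \<longrightarrow> \<alpha> i = v)" for n v
    by (rule AE_I[OF _ tail_const_null[of n v] tail_const_sets[of n v]]) auto
  then have "AE \<alpha> in bernoulli_seq. \<forall>n v. \<not> (\<forall>i. n \<le> i \<longrightarrow> \<alpha> i = v)"
    by (simp add: AE_all_countable)
  then show ?thesis
    by eventually_elim (auto simp: inf01_def)
qed

lemma inf01_measurable: "{\<alpha> \<in> space bernoulli_seq. inf01 \<alpha>} \<in> sets bernoulli_seq"
  unfolding inf01_def by measurable


locale th2 =
  fixes p :: "'a::polish_space measure" and T T' :: "'a \<Rightarrow> 'a" and P :: "'a set"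
  assumes prob: "prob_space p" and sets_p: "sets p = sets borel"
    and Tmp: "measure_preserving_map p p T" and T'mp: "measure_preserving_map p p T'"
    and ae1: "AE x in p. T' (T x) = x" and ae2: "AE x in p. T (T' x) = x"
    and Pm: "P \<in> sets p"
    and gen: "\<forall>B\<in>sets p. \<exists>C\<in>sigma_sets (space p)
              ((\<Union>j. {{x\<in>space p. (T ^^ j) x \<in> P}}) \<union> (\<Union>j. {{x\<in>space p. (T' ^^ j) x \<in> P}})).
            emeasure p ((B - C) \<union> (C - B)) = 0"
begin

lemma space_p[simp]: "space p = UNIV"
  using sets_eq_imp_space_eq[OF sets_p] by simp

lemma meas_p_borel: "measurable M p = measurable M borel"
  by (rule measurable_cong_sets) (simp_all add: sets_p)

lemma meas_borel_p: "measurable p N = measurable borel N"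
  by (rule measurable_cong_sets) (simp_all add: sets_p)

lemma T_meas: "T \<in> p \<rightarrow>\<^sub>M p" and T_distr: "distr p p T = p"
  using Tmp unfolding measure_preserving_map_def by auto

lemma T'_meas: "T' \<in> p \<rightarrow>\<^sub>M p" and T'_distr: "distr p p T' = p"
  using T'mp unfolding measure_preserving_map_def by auto

lemma mp_comp:
  assumes "f \<in> p \<rightarrow>\<^sub>M p" "distr p p f = p" "g \<in> p \<rightarrow>\<^sub>M p" "distr p p g = p"
  shows "(\<lambda>x. f (g x)) \<in> p \<rightarrow>\<^sub>M p" "distr p p (\<lambda>x. f (g x)) = p"
proof -
  show m: "(\<lambda>x. f (g x)) \<in> p \<rightarrow>\<^sub>M p" using measurable_comp[OF assms(3,1)] by (simp add: comp_def)
  have "distr p p (\<lambda>x. f (g x)) = distr (distr p p g) p f"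
    using distr_distr[OF assms(1,3)] by (simp add: comp_def)
  then show "distr p p (\<lambda>x. f (g x)) = p" using assms by simp
qed

lemma funpow_mp:
  assumes "f \<in> p \<rightarrow>\<^sub>M p" "distr p p f = p"
  shows "(f ^^ n) \<in> p \<rightarrow>\<^sub>M p \<and> distr p p (f ^^ n) = p"
proof (induction n)
  case 0
  have "(\<lambda>x. x) \<in> p \<rightarrow>\<^sub>M p" by simp
  then show ?case by (simp add: id_def)
next
  case (Suc n)
  then have "(\<lambda>x. f ((f ^^ n) x)) \<in> p \<rightarrow>\<^sub>M p \<and> distr p p (\<lambda>x. f ((f ^^ n) x)) = p"
    using mp_comp[OF assms, of "f ^^ n"] by blast
  then show ?case by (simp add: comp_def)
qed

lemma AE_mp:
  assumes "f \<in> p \<rightarrow>\<^sub>M p" "distr p p f = p" "{x. Q x} \<in> sets p" "AE x in p. Q x"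
  shows "AE x in p. Q (f x)"
proof -
  have "AE x in distr p p f. Q x" by (subst assms(2)) (rule assms(4))
  then show ?thesis using AE_distr_iff[OF assms(1), of Q] assms(3) by simp
qed

fun wd :: "bool list \<Rightarrow> 'a \<Rightarrow> 'a" where
  "wd [] x = x"
| "wd (b # w) x = (if b then T else T') (wd w x)"

lemma wd_mp: "wd w \<in> p \<rightarrow>\<^sub>M p \<and> distr p p (wd w) = p"
proof (induction w)
  case Nil
  have "(\<lambda>x. x) \<in> p \<rightarrow>\<^sub>M p" by simp
  moreover have "wd [] = (\<lambda>x. x)" by (rule ext) simp
  ultimately show ?case by simp
next
  case (Cons b w)
  have e: "wd (b # w) = (\<lambda>x. (if b then T else T') (wd w x))" by (rule ext) simp
  have "(if b then T else T') \<in> p \<rightarrow>\<^sub>M p" "distr p p (if b then T else T') = p"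
    using T_meas T'_meas T_distr T'_distr by auto
  from mp_comp[OF this] Cons show ?case unfolding e by blast
qed

lemma wd_snoc: "wd (w @ [b]) x = wd w ((if b then T else T') x)"
  by (induction w) auto

definition G :: "'a set" where "G = {x. T' (T x) = x \<and> T (T' x) = x}"

lemma G_sets: "G \<in> sets p"
proof -
  have [measurable]: "T \<in> borel_measurable p" "T' \<in> borel_measurable p"
    using T_meas T'_meas meas_p_borel by auto
  have [measurable]: "(\<lambda>x. T' (T x)) \<in> borel_measurable p" "(\<lambda>x. T (T' x)) \<in> borel_measurable p"
    using measurable_comp[OF T_meas T'_meas[unfolded meas_p_borel]] measurable_comp[OF T'_meas T_meas[unfolded meas_p_borel]]
    by (simp_all add: comp_def)
  have [measurable]: "(\<lambda>x. x) \<in> borel_measurable p" by (rule measurable_ident_sets[OF sets_p])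
  have "{x \<in> space p. T' (T x) = x} \<in> sets p"
    by (rule measurable_equality_set) simp_all
  moreover have "{x \<in> space p. T (T' x) = x} \<in> sets p"
    by (rule measurable_equality_set) simp_all
  ultimately have "{x \<in> space p. T' (T x) = x} \<inter> {x \<in> space p. T (T' x) = x} \<in> sets p" by blast
  then show ?thesis unfolding G_def by (simp add: Collect_conj_eq)
qed

lemma AE_G: "AE x in p. x \<in> G"
  using ae1 ae2 unfolding G_def by eventually_elim simp

definition X1 :: "'a set" where "X1 = {x. \<forall>w. wd w x \<in> G}"

lemma X1_sets: "X1 \<in> sets p"
proof -
  have "X1 = (\<Inter>w. wd w -` G \<inter> space p)" unfolding X1_def by auto
  also have "\<dots> \<in> sets p"
    using measurable_sets[OF conjunct1[OF wd_mp] G_sets] by (intro sets.countable_INT) auto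
  finally show ?thesis .
qed

lemma AE_X1: "AE x in p. x \<in> X1"
proof -
  have "AE x in p. wd w x \<in> G" for w
    using AE_mp[OF conjunct1[OF wd_mp] conjunct2[OF wd_mp], of "\<lambda>x. x \<in> G" w] G_sets AE_G by simp
  then have "AE x in p. \<forall>w. wd w x \<in> G" by (simp add: AE_all_countable)
  then show ?thesis unfolding X1_def by simp
qed

lemma X1_G: assumes "x \<in> X1" shows "T' (T x) = x \<and> T (T' x) = x"
proof -
  have "wd [] x \<in> G" using assms unfolding X1_def by blast
  then show ?thesis unfolding G_def by simp
qed

lemma X1_T: assumes "x \<in> X1" shows "T x \<in> X1"
  unfolding X1_def
proof (intro CollectI allI)
  fix w
  have "wd (w @ [True]) x \<in> G" using assms unfolding X1_def by blast
  then show "wd w (T x) \<in> G" by (simp add: wd_snoc)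
qed

lemma X1_T': assumes "x \<in> X1" shows "T' x \<in> X1"
  unfolding X1_def
proof (intro CollectI allI)
  fix w
  have "wd (w @ [False]) x \<in> G" using assms unfolding X1_def by blast
  then show "wd w (T' x) \<in> G" by (simp add: wd_snoc)
qed

lemma X1_funpow: "x \<in> X1 \<Longrightarrow> (T ^^ n) x \<in> X1" "x \<in> X1 \<Longrightarrow> (T' ^^ n) x \<in> X1"
  by (induction n) (simp_all add: X1_T X1_T')

end


context th2 begin

definition tpow :: "int \<Rightarrow> 'a \<Rightarrow> 'a" where
  "tpow k x = (if 0 \<le> k then (T ^^ nat k) x else (T' ^^ nat (- k)) x)"

lemma tpow_nat: "tpow (int n) x = (T ^^ n) x" unfolding tpow_def by simp
lemma tpow_neg: "tpow (- int n) x = (T' ^^ n) x" unfolding tpow_def by (cases "n = 0") simp_all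
lemma tpow_0[simp]: "tpow 0 x = x" unfolding tpow_def by simp

lemma tpow_X1: "x \<in> X1 \<Longrightarrow> tpow k x \<in> X1"
  unfolding tpow_def using X1_funpow by simp

lemma tpow_mp: "tpow k \<in> p \<rightarrow>\<^sub>M p \<and> distr p p (tpow k) = p"
proof (cases "0 \<le> k")
  case True
  then have "tpow k = T ^^ nat k" unfolding tpow_def by (intro ext) simp
  then show ?thesis using funpow_mp[OF T_meas T_distr] by simp
next
  case False
  then have "tpow k = T' ^^ nat (- k)" unfolding tpow_def by (intro ext) simp
  then show ?thesis using funpow_mp[OF T'_meas T'_distr] by simp
qed

lemma funpow_T'_T: "x \<in> X1 \<Longrightarrow> (T' ^^ Suc m) (T x) = (T' ^^ m) x"
proof -
  assume x: "x \<in> X1"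
  have "(T' ^^ Suc m) (T x) = (T' ^^ m) (T' (T x))" by (simp add: funpow_Suc_right del: funpow.simps)
  then show ?thesis using X1_G[OF x] by simp
qed

lemma funpow_T_T': "x \<in> X1 \<Longrightarrow> (T ^^ Suc m) (T' x) = (T ^^ m) x"
proof -
  assume x: "x \<in> X1"
  have "(T ^^ Suc m) (T' x) = (T ^^ m) (T (T' x))" by (simp add: funpow_Suc_right del: funpow.simps)
  then show ?thesis using X1_G[OF x] by simp
qed

lemma tpow_T: assumes x: "x \<in> X1" shows "tpow k (T x) = tpow (k + 1) x"
proof (cases "0 \<le> k")
  case True
  define n where "n = nat k"
  have k: "k = int n" using True n_def by simp
  have e: "k + 1 = int (Suc n)" using k by simp
  have "tpow k (T x) = (T ^^ n) (T x)" unfolding k by (rule tpow_nat)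
  also have "\<dots> = (T ^^ Suc n) x" by (simp add: funpow_Suc_right del: funpow.simps)
  also have "\<dots> = tpow (k + 1) x" unfolding e by (rule tpow_nat[symmetric])
  finally show ?thesis .
next
  case False
  define m where "m = nat (- k - 1)"
  have k: "k = - int (Suc m)" using False m_def by simp
  have e: "k + 1 = - int m" using k by simp
  have "tpow k (T x) = (T' ^^ Suc m) (T x)" unfolding k by (rule tpow_neg)
  also have "\<dots> = (T' ^^ m) x" using funpow_T'_T[OF x] .
  also have "\<dots> = tpow (k + 1) x" unfolding e by (rule tpow_neg[symmetric])
  finally show ?thesis .
qed

lemma tpow_T': assumes x: "x \<in> X1" shows "tpow k (T' x) = tpow (k - 1) x"
proof (cases "0 < k")
  case True
  define n where "n = nat (k - 1)"
  have k: "k = int (Suc n)" using True n_def by simp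
  have e: "k - 1 = int n" using k by simp
  have "tpow k (T' x) = (T ^^ Suc n) (T' x)" unfolding k by (rule tpow_nat)
  also have "\<dots> = (T ^^ n) x" using funpow_T_T'[OF x] .
  also have "\<dots> = tpow (k - 1) x" unfolding e by (rule tpow_nat[symmetric])
  finally show ?thesis .
next
  case False
  define m where "m = nat (- k)"
  have k: "k = - int m" using False m_def by simp
  have e: "k - 1 = - int (Suc m)" using k by simp
  have "tpow k (T' x) = (T' ^^ m) (T' x)" unfolding k by (rule tpow_neg)
  also have "\<dots> = (T' ^^ Suc m) x" by (simp add: funpow_Suc_right del: funpow.simps)
  also have "\<dots> = tpow (k - 1) x" unfolding e by (rule tpow_neg[symmetric])
  finally show ?thesis .
qed

lemma tpow_add_nat: "x \<in> X1 \<Longrightarrow> tpow a ((T ^^ n) x) = tpow (a + int n) x"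
proof (induction n arbitrary: a)
  case 0 then show ?case by simp
next
  case (Suc n)
  have "tpow a ((T ^^ Suc n) x) = tpow a (T ((T ^^ n) x))" by simp
  also have "\<dots> = tpow (a + 1) ((T ^^ n) x)" using tpow_T X1_funpow(1)[OF Suc.prems] by blast
  also have "\<dots> = tpow (a + int (Suc n)) x" using Suc by (simp add: add.assoc)
  finally show ?case .
qed

lemma tpow_add_neg: "x \<in> X1 \<Longrightarrow> tpow a ((T' ^^ n) x) = tpow (a - int n) x"
proof (induction n arbitrary: a)
  case 0 then show ?case by simp
next
  case (Suc n)
  have "tpow a ((T' ^^ Suc n) x) = tpow a (T' ((T' ^^ n) x))" by simp
  also have "\<dots> = tpow (a - 1) ((T' ^^ n) x)" using tpow_T' X1_funpow(2)[OF Suc.prems] by blast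
  also have "\<dots> = tpow (a - int (Suc n)) x" using Suc by (simp add: algebra_simps)
  finally show ?case .
qed

lemma tpow_add: assumes x: "x \<in> X1" shows "tpow a (tpow b x) = tpow (a + b) x"
proof (cases "0 \<le> b")
  case True
  then have "tpow b x = (T ^^ nat b) x" "int (nat b) = b" unfolding tpow_def by simp_all
  then show ?thesis using tpow_add_nat[OF x, of a "nat b"] by simp
next
  case False
  then have "tpow b x = (T' ^^ nat (- b)) x" "int (nat (- b)) = - b" unfolding tpow_def by simp_all
  then show ?thesis using tpow_add_neg[OF x, of a "nat (- b)"] by simp
qed

definition name :: "'a \<Rightarrow> int \<Rightarrow> bool" where
  "name x k \<longleftrightarrow> tpow k x \<in> P"

lemma name_T: "x \<in> X1 \<Longrightarrow> name (T x) k = name x (k + 1)"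
  unfolding name_def by (simp add: tpow_T)

lemma name_tpow: "x \<in> X1 \<Longrightarrow> name (tpow d x) k = name x (k + d)"
  unfolding name_def by (simp add: tpow_add)

end


definition rr :: "nat \<Rightarrow> (nat \<Rightarrow> bool) \<Rightarrow> nat" where
  "rr n \<beta> = (\<Sum>j\<in>{0..<n}. if \<beta> j then 2 ^ j else 0)"

lemma rr_split: "k \<le> n \<Longrightarrow> rr n \<beta> = rr k \<beta> + (\<Sum>j\<in>{k..<n}. if \<beta> j then 2 ^ j else 0)"
  unfolding rr_def by (simp add: sum.atLeastLessThan_concat)

lemma geom2: "k \<le> n \<Longrightarrow> (\<Sum>j\<in>{k..<n}. (2::nat) ^ j) + 2 ^ k = 2 ^ n"
proof (induction n)
  case 0 then show ?case by simp
next
  case (Suc n)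
  show ?case
  proof (cases "k = Suc n")
    case True then show ?thesis by simp
  next
    case False
    then have "k \<le> n" using Suc.prems by simp
    then have "(\<Sum>j\<in>{k..<Suc n}. (2::nat) ^ j) = (\<Sum>j\<in>{k..<n}. 2 ^ j) + 2 ^ n" by simp
    then show ?thesis using Suc.IH[OF \<open>k \<le> n\<close>] by simp
  qed
qed

lemma tail_bound: "k \<le> n \<Longrightarrow> (\<Sum>j\<in>{k..<n}. if \<beta> j then (2::nat) ^ j else 0) + 2 ^ k \<le> 2 ^ n"
proof -
  assume kn: "k \<le> n"
  have "(\<Sum>j\<in>{k..<n}. if \<beta> j then (2::nat) ^ j else 0) \<le> (\<Sum>j\<in>{k..<n}. 2 ^ j)"
    by (rule sum_mono) simp
  then show ?thesis using geom2[OF kn] by simp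
qed

lemma rr_bound: "rr n \<beta> < 2 ^ n"
  using tail_bound[of 0 n \<beta>] unfolding rr_def by simp

lemma rr_Suc: "rr (Suc n) \<beta> = rr n \<beta> + (if \<beta> n then 2 ^ n else 0)"
  unfolding rr_def by simp

lemma rr_cong: "(\<And>j. j < n \<Longrightarrow> \<beta> j = \<gamma> j) \<Longrightarrow> rr n \<beta> = rr n \<gamma>"
  unfolding rr_def by (rule sum.cong) auto

lemma rr_meas: "(\<lambda>\<alpha>. rr n \<alpha>) \<in> bernoulli_seq \<rightarrow>\<^sub>M count_space UNIV"
proof -
  have "(\<lambda>\<alpha>. (\<lambda>q. rr n (\<lambda>j. q ! j)) (map \<alpha> [0..<n])) \<in> bernoulli_seq \<rightarrow>\<^sub>M count_space UNIV"
    by (rule cs_comp[OF cs_map[OF bs_coord]])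
  moreover have "rr n (\<lambda>j. map \<alpha> [0..<n] ! j) = rr n \<alpha>" for \<alpha> by (rule rr_cong) simp
  ultimately show ?thesis by simp
qed

context th2 begin

definition enc :: "'a \<times> (nat \<Rightarrow> bool) \<Rightarrow> op_path" where
  "enc z = (\<lambda>n. map (\<lambda>j. name (fst z) (int j - int (rr n (snd z)))) [0..<2 ^ n], snd z)"

lemma enc_fst: "fst (enc z) n = map (\<lambda>j. name (fst z) (int j - int (rr n (snd z)))) [0..<2 ^ n]"
  unfolding enc_def by simp

lemma enc_snd: "snd (enc z) = snd z"
  unfolding enc_def by simp

lemma enc_paths: "enc z \<in> OP_paths"
  unfolding OP_paths_def
proof (intro CollectI allI conjI)
  fix n
  show "OP_vertex n (fst (enc z) n)" unfolding OP_vertex_def enc_fst by simp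
  let ?f = "\<lambda>j. name (fst z) (int j - int (rr (Suc n) (snd z)))"
  have w: "fst (enc z) (Suc n) = map ?f [0..<2 * 2 ^ n]" unfolding enc_fst by simp
  show "fst (enc z) n = OP_component (snd (enc z) n) n (fst (enc z) (Suc n))"
  proof (cases "snd z n")
    case True
    have "OP_component (snd (enc z) n) n (fst (enc z) (Suc n)) = drop (2 ^ n) (map ?f [0..<2 * 2 ^ n])"
      unfolding OP_component_def enc_snd w using True by simp
    also have "\<dots> = fst (enc z) n"
      unfolding enc_fst using True by (simp add: list_eq_iff_nth_eq rr_Suc algebra_simps)
    finally show ?thesis by simp
  next
    case False
    have "OP_component (snd (enc z) n) n (fst (enc z) (Suc n)) = take (2 ^ n) (map ?f [0..<2 * 2 ^ n])"
      unfolding OP_component_def enc_snd w using False by simp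
    also have "\<dots> = fst (enc z) n"
      unfolding enc_fst using False by (simp add: list_eq_iff_nth_eq rr_Suc)
    finally show ?thesis by simp
  qed
qed

lemma name_meas: "(\<lambda>x. name x i) \<in> p \<rightarrow>\<^sub>M count_space UNIV"
proof -
  have "{x \<in> space p. name x i} = tpow i -` P \<inter> space p" unfolding name_def by auto
  also have "\<dots> \<in> sets p" using measurable_sets[OF conjunct1[OF tpow_mp] Pm] .
  finally have "{x \<in> space p. name x i} \<in> sets p" .
  then show ?thesis by (simp add: pred_def)
qed

lemma enc_meas: "enc \<in> (p \<Otimes>\<^sub>M bernoulli_seq) \<rightarrow>\<^sub>M TOP"
proof (rule measurable_TOPI)
  show "enc x \<in> OP_paths" for x by (rule enc_paths)
  fix k
  have nm: "(\<lambda>z. name (fst z) i) \<in> (p \<Otimes>\<^sub>M bernoulli_seq) \<rightarrow>\<^sub>M count_space UNIV" for i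
    using measurable_comp[OF measurable_fst name_meas[of i]] by (simp add: comp_def)
  have rm: "(\<lambda>z. rr k (snd z)) \<in> (p \<Otimes>\<^sub>M bernoulli_seq) \<rightarrow>\<^sub>M count_space UNIV"
    using measurable_comp[OF measurable_snd rr_meas[of k]] by (simp add: comp_def)
  have "(\<lambda>z. map (\<lambda>j. name (fst z) (int j - int r)) [0..<2 ^ k]) \<in> (p \<Otimes>\<^sub>M bernoulli_seq) \<rightarrow>\<^sub>M count_space UNIV" for r
    by (rule cs_map[of "\<lambda>j z. name (fst z) (int j - int r)", OF nm])
  from measurable_compose_countable[where f="\<lambda>r z. map (\<lambda>j. name (fst z) (int j - int r)) [0..<2 ^ k]", OF this rm]
  show "(\<lambda>x. fst (enc x) k) \<in> (p \<Otimes>\<^sub>M bernoulli_seq) \<rightarrow>\<^sub>M count_space UNIV"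
    unfolding enc_fst .
  have "(\<lambda>z. snd z k) \<in> (p \<Otimes>\<^sub>M bernoulli_seq) \<rightarrow>\<^sub>M count_space UNIV"
    using measurable_comp[OF measurable_snd bs_coord[of k]] by (simp add: comp_def)
  then show "(\<lambda>x. snd (enc x) k) \<in> (p \<Otimes>\<^sub>M bernoulli_seq) \<rightarrow>\<^sub>M count_space UNIV"
    unfolding enc_snd .
qed

end


lemma rr_tail_eq:
  assumes "m \<le> k" "\<And>j. m \<le> j \<Longrightarrow> \<beta> j = \<gamma> j"
  shows "int (rr k \<beta>) - int (rr m \<beta>) = int (rr k \<gamma>) - int (rr m \<gamma>)"
proof -
  have "(\<Sum>j\<in>{m..<k}. if \<beta> j then (2::nat) ^ j else 0) = (\<Sum>j\<in>{m..<k}. if \<gamma> j then 2 ^ j else 0)"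
    by (rule sum.cong) (auto simp: assms(2))
  then show ?thesis using rr_split[OF assms(1), of \<beta>] rr_split[OF assms(1), of \<gamma>] by simp
qed

lemma rr_ones: "(\<And>j. j < n \<Longrightarrow> \<beta> j) \<Longrightarrow> rr n \<beta> + 1 = 2 ^ n"
proof -
  assume "\<And>j. j < n \<Longrightarrow> \<beta> j"
  then have "rr n \<beta> = (\<Sum>j\<in>{0..<n}. (2::nat) ^ j)" unfolding rr_def by (intro sum.cong) auto
  then show ?thesis using geom2[of 0 n] by simp
qed

lemma rr_zeros: "(\<And>j. j < n \<Longrightarrow> \<not> \<beta> j) \<Longrightarrow> rr n \<beta> = 0"
  unfolding rr_def by (intro sum.neutral) auto

context th2 begin

lemma adic_enc:
  assumes x: "x \<in> X1" and ex: "\<exists>i. \<not> \<alpha> i"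
  shows "adic (enc (x, \<alpha>)) = enc (T x, odometer \<alpha>)"
proof -
  define n0 where "n0 = (LEAST i. \<not> \<alpha> i)"
  have n0: "\<not> \<alpha> n0" unfolding n0_def using ex by (metis LeastI)
  have below: "\<alpha> j" if "j < n0" for j using not_less_Least[OF that[unfolded n0_def]] by simp
  define \<alpha>' where "\<alpha>' = (\<lambda>i. if i < n0 then False else if i = n0 then True else \<alpha> i)"
  have od: "odometer \<alpha> = \<alpha>'" unfolding odometer_def \<alpha>'_def using ex by (simp add: Let_def n0_def)
  define y where "y = enc (x, \<alpha>)"
  have sy: "snd y = \<alpha>" unfolding y_def enc_snd by simp
  have ad: "adic y = (\<lambda>k. if k \<le> n0 then take (2 ^ k) (drop (2 ^ n0) (fst y (Suc n0))) else fst y k, \<alpha>')"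
    unfolding adic_def sy using ex by (simp add: Let_def n0_def[symmetric] \<alpha>'_def)
  have r0: "rr (Suc n0) \<alpha> + 1 = 2 ^ n0" using rr_ones[of n0 \<alpha>, OF below] n0 by (simp add: rr_Suc)
  have r1: "rr k \<alpha>' = 0" if "k \<le> n0" for k using that by (intro rr_zeros) (auto simp: \<alpha>'_def)
  have r2: "rr (Suc n0) \<alpha>' = 2 ^ n0" using r1[of n0] by (simp add: rr_Suc \<alpha>'_def)
  have r3: "int (rr k \<alpha>') = int (rr k \<alpha>) + 1" if "n0 < k" for k
  proof -
    have "int (rr k \<alpha>) - int (rr (Suc n0) \<alpha>) = int (rr k \<alpha>') - int (rr (Suc n0) \<alpha>')"
      by (rule rr_tail_eq) (use that in \<open>auto simp: \<alpha>'_def\<close>)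
    moreover have "int (rr (Suc n0) \<alpha>) + 1 = 2 ^ n0" using arg_cong[OF r0, of int] by simp
    ultimately show ?thesis using r2 by simp
  qed
  have "fst (adic y) k = fst (enc (T x, \<alpha>')) k" for k
  proof (cases "k \<le> n0")
    case True
    have pk: "(2::nat) ^ k \<le> 2 ^ n0" using True by simp
    have "fst (adic y) k = take (2 ^ k) (drop (2 ^ n0) (fst y (Suc n0)))" using ad True by simp
    also have "\<dots> = map (\<lambda>j. name x (int j + 1)) [0..<2 ^ k]"
    proof (rule nth_equalityI)
      show "length (take (2 ^ k) (drop (2 ^ n0) (fst y (Suc n0)))) = length (map (\<lambda>j. name x (int j + 1)) [0..<2 ^ k])"
        unfolding y_def enc_fst using pk by simp
      fix j assume "j < length (take (2 ^ k) (drop (2 ^ n0) (fst y (Suc n0))))"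
      then have j: "j < 2 ^ k" unfolding y_def enc_fst using pk by simp
      then have j2: "2 ^ n0 + j < 2 ^ Suc n0" using pk by (simp add: order_less_le_trans)
      have lw: "length (fst y (Suc n0)) = 2 ^ Suc n0" unfolding y_def enc_fst by simp
      have "take (2 ^ k) (drop (2 ^ n0) (fst y (Suc n0))) ! j = fst y (Suc n0) ! (2 ^ n0 + j)"
        using j lw by (simp add: nth_drop)
      also have "\<dots> = name x (int (2 ^ n0 + j) - int (rr (Suc n0) \<alpha>))"
        unfolding y_def enc_fst using j2 by simp
      also have "int (2 ^ n0 + j) - int (rr (Suc n0) \<alpha>) = int j + 1"
        using r0 by (simp add: of_nat_add[symmetric] del: of_nat_add)
      finally show "take (2 ^ k) (drop (2 ^ n0) (fst y (Suc n0))) ! j = map (\<lambda>j. name x (int j + 1)) [0..<2 ^ k] ! j"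
        using j by simp
    qed
    also have "\<dots> = fst (enc (T x, \<alpha>')) k"
      unfolding enc_fst using r1[OF True] name_T[OF x] by simp
    finally show ?thesis .
  next
    case False
    then have "fst (adic y) k = fst y k" using ad by simp
    also have "\<dots> = fst (enc (T x, \<alpha>')) k"
      unfolding y_def enc_fst using r3[of k] False name_T[OF x] by (simp add: algebra_simps)
    finally show ?thesis .
  qed
  moreover have "snd (adic y) = snd (enc (T x, \<alpha>'))" using ad by (simp add: enc_snd)
  ultimately have "adic y = enc (T x, \<alpha>')" by (simp add: prod_eq_iff fun_eq_iff)
  then show ?thesis unfolding y_def od .
qed

lemma replace_enc:
  fixes \<alpha> :: "nat \<Rightarrow> bool"
  assumes x: "x \<in> X1" and c: "length c = n"
  defines "\<alpha>c \<equiv> (\<lambda>i. if i < n then c ! i else \<alpha> i)"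
  shows "OP_replace n c (enc (x, \<alpha>)) = enc (tpow (int (rr n \<alpha>c) - int (rr n \<alpha>)) x, \<alpha>c)"
proof -
  define y where "y = enc (x, \<alpha>)"
  define d where "d = int (rr n \<alpha>c) - int (rr n \<alpha>)"
  have "fst (OP_replace n c y) k = fst (enc (tpow d x, \<alpha>c)) k" for k
  proof (cases "k < n")
    case True
    have kn: "k \<le> n" using True by simp
    have off: "OP_offset c k n = (\<Sum>j\<in>{k..<n}. if \<alpha>c j then 2 ^ j else 0)"
      unfolding OP_offset_def \<alpha>c_def by (rule sum.cong) auto
    have off2: "int (OP_offset c k n) = int (rr n \<alpha>c) - int (rr k \<alpha>c)"
      using rr_split[OF kn, of \<alpha>c] off by simp
    have ob: "OP_offset c k n + 2 ^ k \<le> 2 ^ n" using tail_bound[OF kn, of \<alpha>c] off by simp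
    have lv: "length (fst y n) = 2 ^ n" unfolding y_def enc_fst by simp
    have "fst (OP_replace n c y) k = take (2 ^ k) (drop (OP_offset c k n) (fst y n))"
      unfolding OP_replace_def using True by simp
    also have "\<dots> = fst (enc (tpow d x, \<alpha>c)) k"
    proof (rule nth_equalityI)
      show "length (take (2 ^ k) (drop (OP_offset c k n) (fst y n))) = length (fst (enc (tpow d x, \<alpha>c)) k)"
        unfolding enc_fst using lv ob by simp
      fix j assume "j < length (take (2 ^ k) (drop (OP_offset c k n) (fst y n)))"
      then have j: "j < 2 ^ k" using lv ob by simp
      have ar: "int (OP_offset c k n + j) - int (rr n \<alpha>) = int j - int (rr k \<alpha>c) + d"
        using off2 unfolding d_def by simp
      have "take (2 ^ k) (drop (OP_offset c k n) (fst y n)) ! j = fst y n ! (OP_offset c k n + j)"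
        using j lv ob by (simp add: nth_drop)
      also have "\<dots> = name x (int (OP_offset c k n + j) - int (rr n \<alpha>))"
        unfolding y_def enc_fst using j ob by simp
      also have "\<dots> = name x (int j - int (rr k \<alpha>c) + d)"
        by (simp only: ar)
      also have "\<dots> = name (tpow d x) (int j - int (rr k \<alpha>c))"
        using name_tpow[OF x] by simp
      also have "\<dots> = fst (enc (tpow d x, \<alpha>c)) k ! j"
        unfolding enc_fst using j by simp
      finally show "take (2 ^ k) (drop (OP_offset c k n) (fst y n)) ! j = fst (enc (tpow d x, \<alpha>c)) k ! j" .
    qed
    finally show ?thesis .
  next
    case False
    then have nk: "n \<le> k" by simp
    have te: "int (rr k \<alpha>c) - int (rr n \<alpha>c) = int (rr k \<alpha>) - int (rr n \<alpha>)"
      by (rule rr_tail_eq[OF nk]) (simp add: \<alpha>c_def)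
    have "fst (OP_replace n c y) k = fst y k" unfolding OP_replace_def using False by simp
    also have "\<dots> = fst (enc (tpow d x, \<alpha>c)) k"
      unfolding y_def enc_fst using name_tpow[OF x] te unfolding d_def by (simp add: algebra_simps)
    finally show ?thesis .
  qed
  moreover have "snd (OP_replace n c y) = snd (enc (tpow d x, \<alpha>c))"
    unfolding OP_replace_def enc_snd y_def \<alpha>c_def by (simp add: enc_snd)
  ultimately have "OP_replace n c y = enc (tpow d x, \<alpha>c)" by (simp add: prod_eq_iff fun_eq_iff)
  then show ?thesis unfolding y_def d_def .
qed

definition sig :: "nat \<Rightarrow> bool list \<Rightarrow> bool list \<Rightarrow> 'a \<times> (nat \<Rightarrow> bool) \<Rightarrow> 'a \<times> (nat \<Rightarrow> bool)" where
  "sig n a b z = (tpow (int (rr n (sw n a b (snd z))) - int (rr n (snd z))) (fst z), sw n a b (snd z))"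

lemma swap_enc:
  assumes x: "x \<in> X1" and a: "length a = n" and b: "length b = n"
  shows "OP_swap n a b (enc (x, \<alpha>)) = enc (sig n a b (x, \<alpha>))"
proof -
  define q where "q = map \<alpha> [0..<n]"
  have lq: "length (swp a b q) = n" unfolding q_def by (rule length_swp_gen[OF a b]) simp
  have sws: "sw n a b \<alpha> = (\<lambda>i. if i < n then swp a b q ! i else \<alpha> i)" unfolding sw_def q_def ..
  have rep: "OP_replace n (swp a b q) (enc (x, \<alpha>)) = enc (sig n a b (x, \<alpha>))"
    unfolding sig_def using replace_enc[OF x lq, of \<alpha>] sws by simp
  have own: "OP_replace n q (enc (x, \<alpha>)) = enc (x, \<alpha>)"
  proof -
    have "(\<lambda>i. if i < n then q ! i else \<alpha> i) = \<alpha>" unfolding q_def by (rule ext) simp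
    then show ?thesis using replace_enc[OF x, of q n \<alpha>] unfolding q_def by simp
  qed
  have ms: "map (snd (enc (x, \<alpha>))) [0..<n] = q" unfolding q_def enc_snd by simp
  show ?thesis
  proof (cases "q = a")
    case True
    then have "OP_swap n a b (enc (x, \<alpha>)) = OP_replace n (swp a b q) (enc (x, \<alpha>))"
      unfolding OP_swap_def ms swp_def by simp
    then show ?thesis using rep by simp
  next
    case qa: False
    show ?thesis
    proof (cases "q = b")
      case True
      then have "OP_swap n a b (enc (x, \<alpha>)) = OP_replace n (swp a b q) (enc (x, \<alpha>))"
        unfolding OP_swap_def ms swp_def using qa by simp
      then show ?thesis using rep by simp
    next
      case False
      then have "OP_swap n a b (enc (x, \<alpha>)) = OP_replace n (swp a b q) (enc (x, \<alpha>))"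
        unfolding OP_swap_def ms swp_def using qa own by simp
      then show ?thesis using rep by simp
    qed
  qed
qed

end


abbreviation "NS \<equiv> PiM (UNIV :: int set) (\<lambda>_. count_space (UNIV :: bool set))"

lemma NS_space[simp]: "space NS = UNIV"
  by (simp add: space_PiM)

lemma NS_coord: "(\<lambda>s. s i) \<in> NS \<rightarrow>\<^sub>M count_space UNIV"
  by (rule measurable_component_singleton) simp

lemma NS_coord_set: "{s. s i} \<in> sets NS"
proof -
  have "(\<lambda>s. s i) -` {True} \<inter> space NS \<in> sets NS" by (rule measurable_sets[OF NS_coord]) simp
  moreover have "(\<lambda>s. s i) -` {True} \<inter> space NS = {s. s i}" by auto
  ultimately show ?thesis by simp
qed

context th2 begin

lemma name_NS: "name \<in> p \<rightarrow>\<^sub>M NS"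
proof (rule measurable_PiM_single')
  fix i :: int show "(\<lambda>x. name x i) \<in> p \<rightarrow>\<^sub>M count_space UNIV" by (rule name_meas)
qed (simp add: space_PiM)

lemma gen_to_NS:
  assumes "C \<in> sigma_sets (space p) ((\<Union>j. {{x\<in>space p. (T ^^ j) x \<in> P}}) \<union> (\<Union>j. {{x\<in>space p. (T' ^^ j) x \<in> P}}))"
  shows "\<exists>D\<in>sets NS. C = name -` D"
  using assms
proof (induction rule: sigma_sets.induct)
  case (Basic a)
  then consider j where "a = {x. (T ^^ j) x \<in> P}" | j where "a = {x. (T' ^^ j) x \<in> P}" by auto
  then show ?case
  proof cases
    case 1
    then have "a = name -` {s. s (int j)}" by (auto simp: name_def tpow_nat)
    then show ?thesis using NS_coord_set by blast
  next
    case 2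
    then have "a = name -` {s. s (- int j)}" by (auto simp: name_def tpow_neg)
    then show ?thesis using NS_coord_set by blast
  qed
next
  case Empty
  show ?case by (intro bexI[of _ "{}"]) auto
next
  case (Compl a)
  then obtain D where D: "D \<in> sets NS" "a = name -` D" by blast
  have "UNIV - D \<in> sets NS" using D(1) sets.compl_sets[of D NS] by simp
  moreover have "space p - a = name -` (UNIV - D)" using D(2) by auto
  ultimately show ?case by blast
next
  case (Union a)
  then have "\<forall>i. \<exists>D. D \<in> sets NS \<and> a i = name -` D" by blast
  from choice[OF this] obtain D where D0: "\<forall>i. D i \<in> sets NS \<and> a i = name -` D i" by blast
  then have D: "\<And>i. D i \<in> sets NS" "\<And>i. a i = name -` D i" by auto
  have "(\<Union>i. D i) \<in> sets NS" using D(1) by blast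
  moreover have "(\<Union>i. a i) = name -` (\<Union>i. D i)" using D(2) by auto
  ultimately show ?case by blast
qed

lemma gen_NS: assumes B: "B \<in> sets p" shows "\<exists>D\<in>sets NS. emeasure p ((B - name -` D) \<union> (name -` D - B)) = 0"
proof -
  obtain C where C: "C \<in> sigma_sets (space p) ((\<Union>j. {{x\<in>space p. (T ^^ j) x \<in> P}}) \<union> (\<Union>j. {{x\<in>space p. (T' ^^ j) x \<in> P}}))"
    "emeasure p ((B - C) \<union> (C - B)) = 0"
    using gen B by blast
  obtain D where "D \<in> sets NS" "C = name -` D" using gen_to_NS[OF C(1)] by blast
  then show ?thesis using C(2) by blast
qed

definition dense_set :: "'a set" where
  "dense_set = (SOME D. countable D \<and> (\<forall>X. open X \<longrightarrow> X \<noteq> {} \<longrightarrow> (\<exists>d\<in>D. d \<in> X)))"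

lemma dense_set: "countable dense_set" "\<And>X. open X \<Longrightarrow> X \<noteq> {} \<Longrightarrow> \<exists>d\<in>dense_set. d \<in> X"
proof -
  have "\<exists>D::'a set. countable D \<and> (\<forall>X. open X \<longrightarrow> X \<noteq> {} \<longrightarrow> (\<exists>d\<in>D. d \<in> X))"
    by (rule countable_dense_exists)
  then have "countable dense_set \<and> (\<forall>X. open X \<longrightarrow> X \<noteq> {} \<longrightarrow> (\<exists>d\<in>dense_set. d \<in> X))"
    unfolding dense_set_def by (rule someI_ex)
  then show "countable dense_set" "\<And>X. open X \<Longrightarrow> X \<noteq> {} \<Longrightarrow> \<exists>d\<in>dense_set. d \<in> X" by auto
qed

lemma dense_set_ne: "dense_set \<noteq> {}"
  using dense_set(2)[of UNIV] by auto

definition dd :: "nat \<Rightarrow> 'a" where "dd = from_nat_into dense_set"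

lemma dd_dense: "e > 0 \<Longrightarrow> \<exists>i. dist (dd i) x < e"
proof -
  assume e: "e > 0"
  obtain d where d: "d \<in> dense_set" "d \<in> ball x e" using dense_set(2)[of "ball x e"] e by auto
  have "d \<in> range dd" unfolding dd_def using range_from_nat_into[OF dense_set_ne dense_set(1)] d(1) by simp
  then obtain i where "d = dd i" by auto
  then show ?thesis using d(2) by (auto simp: dist_commute)
qed

definition Dd :: "nat \<Rightarrow> nat \<Rightarrow> (int \<Rightarrow> bool) set" where
  "Dd i m = (SOME D. D \<in> sets NS \<and> emeasure p ((ball (dd i) (1 / Suc m) - name -` D) \<union> (name -` D - ball (dd i) (1 / Suc m))) = 0)"

lemma Dd: "Dd i m \<in> sets NS"
  "emeasure p ((ball (dd i) (1 / Suc m) - name -` Dd i m) \<union> (name -` Dd i m - ball (dd i) (1 / Suc m))) = 0"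
proof -
  have "ball (dd i) (1 / Suc m) \<in> sets p" unfolding sets_p by simp
  from gen_NS[OF this] have "\<exists>D. D \<in> sets NS \<and> emeasure p ((ball (dd i) (1 / Suc m) - name -` D) \<union> (name -` D - ball (dd i) (1 / Suc m))) = 0"
    by blast
  from someI_ex[OF this]
  show "Dd i m \<in> sets NS"
    "emeasure p ((ball (dd i) (1 / Suc m) - name -` Dd i m) \<union> (name -` Dd i m - ball (dd i) (1 / Suc m))) = 0"
    unfolding Dd_def by auto
qed

definition Gd :: "'a set" where
  "Gd = {x. \<forall>i m. x \<in> ball (dd i) (1 / Suc m) \<longleftrightarrow> name x \<in> Dd i m}"

lemma AE_Gd: "AE x in p. x \<in> Gd"
proof -
  have "AE x in p. (x \<in> ball (dd i) (1 / Suc m) \<longleftrightarrow> name x \<in> Dd i m)" for i m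
  proof (rule AE_I)
    show "emeasure p ((ball (dd i) (1 / Suc m) - name -` Dd i m) \<union> (name -` Dd i m - ball (dd i) (1 / Suc m))) = 0"
      by (rule Dd(2))
    have "ball (dd i) (1 / Suc m) \<in> sets p" unfolding sets_p by simp
    moreover have "name -` Dd i m \<in> sets p" using measurable_sets[OF name_NS Dd(1)[of i m]] by simp
    ultimately show "(ball (dd i) (1 / Suc m) - name -` Dd i m) \<union> (name -` Dd i m - ball (dd i) (1 / Suc m)) \<in> sets p"
      by blast
  qed auto
  then have "AE x in p. \<forall>i m. (x \<in> ball (dd i) (1 / Suc m) \<longleftrightarrow> name x \<in> Dd i m)"
    by (simp add: AE_all_countable)
  then show ?thesis unfolding Gd_def by simp
qed

lemma Gd_sets: "Gd \<in> sets p"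
proof -
  have "Gd = (\<Inter>i. \<Inter>m. {x. x \<in> ball (dd i) (1 / Suc m) \<longleftrightarrow> name x \<in> Dd i m})" unfolding Gd_def by auto
  moreover have "{x. x \<in> ball (dd i) (1 / Suc m) \<longleftrightarrow> name x \<in> Dd i m} \<in> sets p" for i m
  proof -
    have b: "ball (dd i) (1 / Suc m) \<in> sets p" unfolding sets_p by simp
    have c: "name -` Dd i m \<in> sets p" using measurable_sets[OF name_NS Dd(1)[of i m]] by simp
    have "{x. x \<in> ball (dd i) (1 / Suc m) \<longleftrightarrow> name x \<in> Dd i m}
      = (ball (dd i) (1 / Suc m) \<inter> name -` Dd i m) \<union> ((UNIV - ball (dd i) (1 / Suc m)) \<inter> (UNIV - name -` Dd i m))"
      by auto
    also have "\<dots> \<in> sets p" using b c sets.compl_sets[of _ p] by auto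
    finally show ?thesis .
  qed
  ultimately show ?thesis by auto
qed

definition JJ :: "(int \<Rightarrow> bool) \<Rightarrow> nat \<Rightarrow> nat" where
  "JJ s m = (LEAST i. s \<in> Dd i m)"

definition fseq :: "nat \<Rightarrow> (int \<Rightarrow> bool) \<Rightarrow> 'a" where
  "fseq m s = (if Cauchy (\<lambda>m. dd (JJ s m)) then dd (JJ s m) else dd 0)"

definition decx :: "(int \<Rightarrow> bool) \<Rightarrow> 'a" where
  "decx s = lim (\<lambda>m. fseq m s)"

lemma JJ_meas: "(\<lambda>s. JJ s m) \<in> NS \<rightarrow>\<^sub>M count_space UNIV"
  unfolding JJ_def
proof (rule measurable_Least)
  fix i
  have "{s \<in> space NS. s \<in> Dd i m} \<in> sets NS" using Dd(1) by simp
  then show "(\<lambda>s. s \<in> Dd i m) \<in> NS \<rightarrow>\<^sub>M count_space UNIV" by (simp add: pred_def)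
qed

lemma ddJ_meas: "(\<lambda>s. dd (JJ s m)) \<in> borel_measurable NS"
  using measurable_compose_countable[where f="\<lambda>i s. dd i", OF measurable_const JJ_meas] by simp

lemma fseq_meas: "fseq m \<in> borel_measurable NS"
proof -
  have [measurable]: "\<And>m. (\<lambda>s. dd (JJ s m)) \<in> borel_measurable NS" by (rule ddJ_meas)
  have "{s \<in> space NS. Cauchy (\<lambda>m. dd (JJ s m))} \<in> sets NS" by (rule sets_Collect_Cauchy) (rule ddJ_meas)
  then have [measurable]: "Measurable.pred NS (\<lambda>s. Cauchy (\<lambda>m. dd (JJ s m)))" by (simp add: pred_def)
  show ?thesis unfolding fseq_def[abs_def] by measurable
qed

lemma fseq_conv: "(\<lambda>m. fseq m s) \<longlonglongrightarrow> decx s"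
proof -
  have "convergent (\<lambda>m. fseq m s)"
  proof (cases "Cauchy (\<lambda>m. dd (JJ s m))")
    case True
    then show ?thesis unfolding fseq_def using Cauchy_convergent_iff by auto
  next
    case False
    then show ?thesis unfolding fseq_def by (auto intro: convergent_const)
  qed
  then show ?thesis unfolding decx_def by (simp add: convergent_LIMSEQ_iff)
qed

lemma decx_meas: "decx \<in> borel_measurable NS"
  by (rule borel_measurable_LIMSEQ_metric[OF fseq_meas fseq_conv])

lemma decx_name: assumes x: "x \<in> Gd" shows "decx (name x) = x"
proof -
  have J: "dist (dd (JJ (name x) m)) x < 1 / Suc m" for m
  proof -
    obtain i where "dist (dd i) x < 1 / Suc m" using dd_dense[of "1 / Suc m" x] by auto
    then have "name x \<in> Dd i m" using x unfolding Gd_def by (auto simp: dist_commute)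
    then have "name x \<in> Dd (JJ (name x) m) m" unfolding JJ_def by (rule LeastI)
    then have "x \<in> ball (dd (JJ (name x) m)) (1 / Suc m)" using x unfolding Gd_def by blast
    then show ?thesis by (simp add: dist_commute)
  qed
  have lim: "(\<lambda>m. dd (JJ (name x) m)) \<longlonglongrightarrow> x"
  proof (rule metric_LIMSEQ_I)
    fix r :: real assume r: "r > 0"
    obtain N :: nat where N: "1 / Suc N < r" using reals_Archimedean[OF r] by (auto simp: inverse_eq_divide)
    show "\<exists>no. \<forall>n\<ge>no. dist (dd (JJ (name x) n)) x < r"
    proof (intro exI allI impI)
      fix n assume "N \<le> n"
      then have "1 / real (Suc n) \<le> 1 / Suc N" by (simp add: frac_le)
      then show "dist (dd (JJ (name x) n)) x < r" using J[of n] N by linarith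
    qed
  qed
  then have "Cauchy (\<lambda>m. dd (JJ (name x) m))" by (rule LIMSEQ_imp_Cauchy)
  then have "(\<lambda>m. fseq m (name x)) = (\<lambda>m. dd (JJ (name x) m))" unfolding fseq_def by simp
  then have "(\<lambda>m. dd (JJ (name x) m)) \<longlonglongrightarrow> decx (name x)" using fseq_conv[of "name x"] by simp
  from LIMSEQ_unique[OF this lim] show ?thesis .
qed

end


lemma rr_ge: "\<beta> i \<Longrightarrow> i < n \<Longrightarrow> 2 ^ i \<le> rr n \<beta>"
  unfolding rr_def using member_le_sum[of i "{0..<n}" "\<lambda>j. if \<beta> j then (2::nat) ^ j else 0"] by simp

lemma rr_compl: "rr n \<beta> + rr n (\<lambda>j. \<not> \<beta> j) + 1 = 2 ^ n"
proof -
  have "rr n \<beta> + rr n (\<lambda>j. \<not> \<beta> j) = (\<Sum>j\<in>{0..<n}. (2::nat) ^ j)"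
    unfolding rr_def sum.distrib[symmetric] by (rule sum.cong) auto
  then show ?thesis using geom2[of 0 n] by simp
qed

lemma rr_lt_zero: "\<not> \<beta> i \<Longrightarrow> i < n \<Longrightarrow> rr n \<beta> + 2 ^ i < 2 ^ n"
  using rr_ge[of "\<lambda>j. \<not> \<beta> j" i n] rr_compl[of n \<beta>] by simp

definition okn :: "nat \<Rightarrow> nat \<Rightarrow> int \<Rightarrow> bool" where
  "okn n r k \<longleftrightarrow> 0 \<le> k + int r \<and> k + int r < 2 ^ n"

lemma inf01_ok: assumes "inf01 \<alpha>" shows "\<exists>n. okn n (rr n \<alpha>) k"
proof -
  obtain i1 where i1: "nat (- k) \<le> i1" "\<alpha> i1" using assms unfolding inf01_def by blast
  obtain i2 where i2: "nat k \<le> i2" "\<not> \<alpha> i2" using assms unfolding inf01_def by blast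
  define n where "n = Suc (max i1 i2)"
  have "2 ^ i1 \<le> rr n \<alpha>" using rr_ge[of \<alpha> i1 n, OF i1(2)] n_def by simp
  moreover have "rr n \<alpha> + 2 ^ i2 < 2 ^ n" using rr_lt_zero[of \<alpha> i2 n, OF i2(2)] n_def by simp
  moreover have "i1 < 2 ^ i1" "i2 < 2 ^ i2" by (simp_all add: less_exp)
  ultimately have f1: "i1 < rr n \<alpha>" and f2: "rr n \<alpha> + i2 < 2 ^ n" by linarith+
  have g1: "int i1 < int (rr n \<alpha>)" using f1 by simp
  have g2: "int (rr n \<alpha>) + int i2 < 2 ^ n"
  proof -
    have "int (rr n \<alpha> + i2) < int (2 ^ n)" using f2 by (simp only: of_nat_less_iff)
    then show ?thesis by simp
  qed
  have h1: "- k \<le> int i1" using i1(1) by linarith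
  have h2: "k \<le> int i2" using i2(1) by linarith
  have "okn n (rr n \<alpha>) k" unfolding okn_def using g1 g2 h1 h2 by linarith
  then show ?thesis by blast
qed

definition NN :: "op_path \<Rightarrow> int \<Rightarrow> nat" where
  "NN y k = (LEAST n. okn n (rr n (snd y)) k)"

definition namefrom :: "op_path \<Rightarrow> int \<Rightarrow> bool" where
  "namefrom y k = fst y (NN y k) ! nat (k + int (rr (NN y k) (snd y)))"

lemma rr_TOP: "(\<lambda>y. rr n (snd y)) \<in> TOP \<rightarrow>\<^sub>M count_space UNIV"
proof -
  have m: "(\<lambda>y. (\<lambda>q. rr n (\<lambda>j. q ! j)) (map (\<lambda>j. snd y j) [0..<n])) \<in> TOP \<rightarrow>\<^sub>M count_space UNIV"
    by (rule cs_comp[OF cs_map[OF meas_snd_TOP]])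
  have e: "(\<lambda>y. (\<lambda>q. rr n (\<lambda>j. q ! j)) (map (\<lambda>j. snd y j) [0..<n])) = (\<lambda>y. rr n (snd y))"
    by (intro ext rr_cong) simp
  show ?thesis using m unfolding e .
qed

lemma NN_meas: "(\<lambda>y. NN y k) \<in> TOP \<rightarrow>\<^sub>M count_space UNIV"
  unfolding NN_def
proof (rule measurable_Least)
  fix n
  show "(\<lambda>y. okn n (rr n (snd y)) k) \<in> TOP \<rightarrow>\<^sub>M count_space UNIV"
    by (rule cs_comp[OF rr_TOP])
qed

lemma namefrom_meas: "(\<lambda>y. namefrom y k) \<in> TOP \<rightarrow>\<^sub>M count_space UNIV"
proof -
  have "(\<lambda>y. fst y n ! nat (k + int (rr n (snd y)))) \<in> TOP \<rightarrow>\<^sub>M count_space UNIV" for n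
  proof -
    have "(\<lambda>y. (fst y n, rr n (snd y))) \<in> TOP \<rightarrow>\<^sub>M count_space UNIV"
      by (rule cs_pair[OF meas_fst_TOP rr_TOP])
    from cs_comp[OF this, of "\<lambda>(w, r). w ! nat (k + int r)"] show ?thesis by simp
  qed
  from measurable_compose_countable[where f="\<lambda>n y. fst y n ! nat (k + int (rr n (snd y)))", OF this NN_meas]
  show ?thesis unfolding namefrom_def .
qed

lemma namefrom_NS: "namefrom \<in> TOP \<rightarrow>\<^sub>M NS"
proof (rule measurable_PiM_single')
  fix i :: int show "(\<lambda>y. namefrom y i) \<in> TOP \<rightarrow>\<^sub>M count_space UNIV" by (rule namefrom_meas)
qed (simp add: space_PiM)

lemma snd_TOP_bs: "snd \<in> TOP \<rightarrow>\<^sub>M bernoulli_seq"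
  by (rule bs_measurableI) (rule meas_snd_TOP)

lemma inf01_odometer: assumes "inf01 \<alpha>" shows "inf01 (odometer \<alpha>)"
proof -
  obtain n0 where n0: "\<And>i. n0 < i \<Longrightarrow> odometer \<alpha> i = \<alpha> i"
  proof (cases "\<exists>n. \<not> \<alpha> n")
    case True
    define l where "l = (LEAST n. \<not> \<alpha> n)"
    have "odometer \<alpha> = (\<lambda>i. if i < l then False else if i = l then True else \<alpha> i)"
      unfolding odometer_def l_def using True by (simp only: if_True Let_def)
    then have "\<And>i. l < i \<Longrightarrow> odometer \<alpha> i = \<alpha> i" by simp
    then show ?thesis by (rule that)
  next
    case False
    then have "odometer \<alpha> = \<alpha>" unfolding odometer_def by (simp only: if_False)
    then show ?thesis using that[of 0] by simp
  qed
  show ?thesis unfolding inf01_def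
  proof (intro allI conjI)
    fix n
    obtain i where "max n (Suc n0) \<le> i" "\<alpha> i" using assms unfolding inf01_def by blast
    then show "\<exists>i\<ge>n. odometer \<alpha> i" using n0[of i] by (intro exI[of _ i]) auto
    obtain j where "max n (Suc n0) \<le> j" "\<not> \<alpha> j" using assms unfolding inf01_def by blast
    then show "\<exists>i\<ge>n. \<not> odometer \<alpha> i" using n0[of j] by (intro exI[of _ j]) auto
  qed
qed

context th2 begin

lemma namefrom_enc: assumes "inf01 \<alpha>" shows "namefrom (enc (x, \<alpha>)) = name x"
proof
  fix k
  define n where "n = NN (enc (x, \<alpha>)) k"
  have "okn n (rr n \<alpha>) k" unfolding n_def NN_def enc_snd snd_conv
    using inf01_ok[OF assms, of k] by (rule LeastI_ex)
  then have ok: "0 \<le> k + int (rr n \<alpha>)" "k + int (rr n \<alpha>) < 2 ^ n" unfolding okn_def by auto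
  then have lt: "nat (k + int (rr n \<alpha>)) < 2 ^ n"
    by (metis nat_less_iff of_nat_numeral of_nat_power)
  have "namefrom (enc (x, \<alpha>)) k = fst (enc (x, \<alpha>)) n ! nat (k + int (rr n \<alpha>))"
    unfolding namefrom_def n_def[symmetric] enc_snd by simp
  also have "\<dots> = name x (int (nat (k + int (rr n \<alpha>))) - int (rr n \<alpha>))"
    unfolding enc_fst using lt by simp
  also have "\<dots> = name x k" using ok(1) by simp
  finally show "namefrom (enc (x, \<alpha>)) k = name x k" .
qed

definition dec :: "op_path \<Rightarrow> 'a \<times> (nat \<Rightarrow> bool)" where
  "dec y = (decx (namefrom y), snd y)"

lemma dec_meas: "dec \<in> TOP \<rightarrow>\<^sub>M (p \<Otimes>\<^sub>M bernoulli_seq)"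
  unfolding dec_def
proof (rule measurable_Pair)
  have "(\<lambda>y. decx (namefrom y)) \<in> TOP \<rightarrow>\<^sub>M borel"
    using measurable_comp[OF namefrom_NS decx_meas] by (simp add: comp_def)
  then show "(\<lambda>y. decx (namefrom y)) \<in> TOP \<rightarrow>\<^sub>M p" unfolding meas_p_borel .
  show "snd \<in> TOP \<rightarrow>\<^sub>M bernoulli_seq" by (rule snd_TOP_bs)
qed

definition Xg :: "'a set" where "Xg = {x. \<forall>k. tpow k x \<in> X1 \<inter> Gd}"

definition B0 :: "('a \<times> (nat \<Rightarrow> bool)) set" where "B0 = Xg \<times> {\<alpha>. inf01 \<alpha>}"

lemma Xg_X1G: "x \<in> Xg \<Longrightarrow> x \<in> X1 \<inter> Gd"
proof -
  assume "x \<in> Xg"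
  then have "tpow 0 x \<in> X1 \<inter> Gd" unfolding Xg_def by blast
  then show ?thesis by (simp only: tpow_0)
qed

lemma Xg_X1: "x \<in> Xg \<Longrightarrow> x \<in> X1" using Xg_X1G by blast
lemma Xg_Gd: "x \<in> Xg \<Longrightarrow> x \<in> Gd" using Xg_X1G by blast

lemma Xg_T: assumes "x \<in> Xg" shows "T x \<in> Xg"
  unfolding Xg_def
proof (intro CollectI allI)
  fix k
  have "tpow (k + 1) x \<in> X1 \<inter> Gd" using assms unfolding Xg_def by blast
  then show "tpow k (T x) \<in> X1 \<inter> Gd" using tpow_T[OF Xg_X1[OF assms]] by simp
qed

lemma dec_enc: assumes "z \<in> B0" shows "dec (enc z) = z"
proof -
  obtain x \<alpha> where z: "z = (x, \<alpha>)" "x \<in> Xg" "inf01 \<alpha>" using assms unfolding B0_def by blast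
  have "dec (enc z) = (decx (name x), \<alpha>)" unfolding dec_def z(1) namefrom_enc[OF z(3)] enc_snd by simp
  also have "\<dots> = z" using decx_name[OF Xg_Gd[OF z(2)]] z(1) by simp
  finally show ?thesis .
qed

lemma B0_TO: assumes "z \<in> B0" shows "(\<lambda>(x, \<alpha>). (T x, odometer \<alpha>)) z \<in> B0"
proof -
  obtain x \<alpha> where z: "z = (x, \<alpha>)" "x \<in> Xg" "inf01 \<alpha>" using assms unfolding B0_def by blast
  show ?thesis unfolding z(1) B0_def using Xg_T[OF z(2)] inf01_odometer[OF z(3)] by simp
qed

lemma Xg_sets: "Xg \<in> sets p"
proof -
  have "Xg = (\<Inter>k. tpow k -` (X1 \<inter> Gd) \<inter> space p)" unfolding Xg_def by auto
  also have "\<dots> \<in> sets p"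
    using measurable_sets[OF conjunct1[OF tpow_mp] sets.Int[OF X1_sets Gd_sets]] by (intro sets.countable_INT) auto
  finally show ?thesis .
qed

lemma AE_Xg: "AE x in p. x \<in> Xg"
proof -
  have "AE x in p. x \<in> X1 \<inter> Gd" using AE_X1 AE_Gd by eventually_elim simp
  moreover have S: "{x. x \<in> X1 \<inter> Gd} \<in> sets p"
  proof -
    have "{x. x \<in> X1 \<inter> Gd} = X1 \<inter> Gd" by blast
    then show ?thesis using sets.Int[OF X1_sets Gd_sets] by (simp only:)
  qed
  ultimately have "AE x in p. tpow k x \<in> X1 \<inter> Gd" for k
    by (rule AE_mp[OF conjunct1[OF tpow_mp] conjunct2[OF tpow_mp], rotated])
  then have "AE x in p. \<forall>k. tpow k x \<in> X1 \<inter> Gd" by (simp add: AE_all_countable)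
  then show ?thesis unfolding Xg_def by simp
qed

lemma B0_sets: "B0 \<in> sets (p \<Otimes>\<^sub>M bernoulli_seq)"
proof -
  have "{\<alpha>. inf01 \<alpha>} \<in> sets bernoulli_seq" using inf01_measurable by simp
  then show ?thesis unfolding B0_def using Xg_sets by (rule pair_measureI[rotated])
qed

lemma AE_B0: "AE z in p \<Otimes>\<^sub>M bernoulli_seq. z \<in> B0"
proof -
  interpret p: prob_space p by (rule prob)
  interpret m: prob_space bernoulli_seq by (rule bs_prob)
  interpret pair_sigma_finite p bernoulli_seq ..
  have "{z \<in> space (p \<Otimes>\<^sub>M bernoulli_seq). z \<in> B0} \<in> sets (p \<Otimes>\<^sub>M bernoulli_seq)"
    using B0_sets by (simp add: space_pair_measure)
  moreover have "AE x in p. AE \<alpha> in bernoulli_seq. (x, \<alpha>) \<in> B0"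
    using AE_Xg
  proof eventually_elim
    case (elim x)
    show ?case using AE_inf01 by eventually_elim (simp add: B0_def elim)
  qed
  ultimately show ?thesis by (rule AE_pair_measure)
qed

end


lemma offset_bound: "k \<le> n \<Longrightarrow> OP_offset c k n + 2 ^ k \<le> 2 ^ n"
  unfolding OP_offset_def using tail_bound[of k n "\<lambda>j. c ! j"] by simp

lemma offset_Suc: "k < n \<Longrightarrow> OP_offset c k n = (if c ! k then 2 ^ k else 0) + OP_offset c (Suc k) n"
  unfolding OP_offset_def by (simp add: sum.atLeast_Suc_lessThan)

lemma replace_paths:
  assumes y: "y \<in> OP_paths" and c: "length c = n"
  shows "OP_replace n c y \<in> OP_paths"
proof -
  define v where "v = fst y n"
  have lv: "length v = 2 ^ n"
  proof -
    have "\<forall>k. OP_vertex k (fst y k) \<and> fst y k = OP_component (snd y k) k (fst y (Suc k))"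
      using y unfolding OP_paths_def by (rule CollectD)
    then show ?thesis unfolding v_def OP_vertex_def by blast
  qed
  have yv: "\<And>k. OP_vertex k (fst y k)" and yc: "\<And>k. fst y k = OP_component (snd y k) k (fst y (Suc k))"
  proof -
    have "\<forall>k. OP_vertex k (fst y k) \<and> fst y k = OP_component (snd y k) k (fst y (Suc k))"
      using y unfolding OP_paths_def by (rule CollectD)
    then show "\<And>k. OP_vertex k (fst y k)" "\<And>k. fst y k = OP_component (snd y k) k (fst y (Suc k))"
      by blast+
  qed
  have f: "fst (OP_replace n c y) k = (if k < n then take (2 ^ k) (drop (OP_offset c k n) v) else fst y k)" for k
    unfolding OP_replace_def v_def by simp
  have s: "snd (OP_replace n c y) k = (if k < n then c ! k else snd y k)" for k
    unfolding OP_replace_def by simp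
  show ?thesis unfolding OP_paths_def
  proof (intro CollectI allI conjI)
    fix k
    show "OP_vertex k (fst (OP_replace n c y) k)"
    proof (cases "k < n")
      case True
      then show ?thesis unfolding f OP_vertex_def using offset_bound[of k n c] lv by simp
    next
      case False
      then show ?thesis unfolding f using yv by simp
    qed
    show "fst (OP_replace n c y) k = OP_component (snd (OP_replace n c y) k) k (fst (OP_replace n c y) (Suc k))"
    proof (cases "Suc k < n")
      case True
      then have kn: "k < n" by simp
      define o1 where "o1 = OP_offset c (Suc k) n"
      have ob: "o1 + 2 ^ Suc k \<le> 2 ^ n" unfolding o1_def using offset_bound[of "Suc k" n c] True by simp
      have fk: "fst (OP_replace n c y) k = take (2 ^ k) (drop ((if c ! k then 2 ^ k else 0) + o1) v)"
        unfolding f o1_def using kn offset_Suc[OF kn, of c] by simp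
      have fk1: "fst (OP_replace n c y) (Suc k) = take (2 ^ Suc k) (drop o1 v)"
        unfolding f o1_def using True by simp
      show ?thesis
      proof (cases "c ! k")
        case True
        have "OP_component (snd (OP_replace n c y) k) k (fst (OP_replace n c y) (Suc k))
            = drop (2 ^ k) (take (2 ^ Suc k) (drop o1 v))"
          unfolding OP_component_def s fk1 using kn True by simp
        also have "\<dots> = take (2 ^ k) (drop (2 ^ k + o1) v)"
          by (simp add: drop_take add.commute)
        finally show ?thesis unfolding fk using True by simp
      next
        case False
        have "OP_component (snd (OP_replace n c y) k) k (fst (OP_replace n c y) (Suc k))
            = take (2 ^ k) (take (2 ^ Suc k) (drop o1 v))"
          unfolding OP_component_def s fk1 using kn False by simp
        also have "\<dots> = take (2 ^ k) (drop o1 v)" by (simp add: min_def)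
        finally show ?thesis unfolding fk using False by simp
      qed
    next
      case False
      show ?thesis
      proof (cases "k < n")
        case True
        then have nk: "n = Suc k" using False by simp
        have o0: "OP_offset c (Suc k) n = 0" unfolding OP_offset_def nk by simp
        have fk: "fst (OP_replace n c y) k = take (2 ^ k) (drop (if c ! k then 2 ^ k else 0) v)"
          unfolding f using True offset_Suc[OF True, of c] o0 by simp
        have fk1: "fst (OP_replace n c y) (Suc k) = v" using f[of "Suc k"] nk unfolding v_def by simp
        show ?thesis
        proof (cases "c ! k")
          case ck: True
          have "length (drop (2 ^ k) v) = 2 ^ k" using lv nk by simp
          then have "take (2 ^ k) (drop (2 ^ k) v) = drop (2 ^ k) v" by simp
          then show ?thesis unfolding fk fk1 OP_component_def s using True ck by simp
        next
          case ck: False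
          show ?thesis unfolding fk fk1 OP_component_def s using True ck by simp
        qed
      next
        case False
        then show ?thesis unfolding f s using yc[of k] by simp
      qed
    qed
  qed
qed

lemma swap_paths: "y \<in> OP_paths \<Longrightarrow> length a = n \<Longrightarrow> length b = n \<Longrightarrow> OP_swap n a b y \<in> OP_paths"
  unfolding OP_swap_def using replace_paths by simp

lemma swap_meas:
  assumes a: "length a = n" and b: "length b = n"
  shows "OP_swap n a b \<in> TOP \<rightarrow>\<^sub>M TOP"
proof (rule measurable_TOPI)
  show "OP_swap n a b y \<in> OP_paths" if "y \<in> space TOP" for y using that swap_paths[OF _ a b] by simp
  fix k
  have m1: "(\<lambda>y. (map (\<lambda>j. snd y j) [0..<n], fst y n, fst y k)) \<in> TOP \<rightarrow>\<^sub>M count_space UNIV"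
    by (rule cs_pair[OF cs_map[OF meas_snd_TOP] cs_pair[OF meas_fst_TOP meas_fst_TOP]])
  define G where "G = (\<lambda>(q, v, w). if q = a then (if k < n then take (2 ^ k) (drop (OP_offset b k n) v) else w)
     else if q = b then (if k < n then take (2 ^ k) (drop (OP_offset a k n) v) else w) else (w :: bool list))"
  have "(\<lambda>y. G (map (\<lambda>j. snd y j) [0..<n], fst y n, fst y k)) \<in> TOP \<rightarrow>\<^sub>M count_space UNIV"
    by (rule cs_comp[OF m1])
  moreover have "(\<lambda>y. G (map (\<lambda>j. snd y j) [0..<n], fst y n, fst y k)) = (\<lambda>y. fst (OP_swap n a b y) k)"
    unfolding G_def OP_swap_def OP_replace_def by (rule ext) simp
  ultimately show "(\<lambda>y. fst (OP_swap n a b y) k) \<in> TOP \<rightarrow>\<^sub>M count_space UNIV" by (simp only:)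
  have m2: "(\<lambda>y. (map (\<lambda>j. snd y j) [0..<n], snd y k)) \<in> TOP \<rightarrow>\<^sub>M count_space UNIV"
    by (rule cs_pair[OF cs_map[OF meas_snd_TOP] meas_snd_TOP])
  define H where "H = (\<lambda>(q, w). if q = a then (if k < n then b ! k else w)
     else if q = b then (if k < n then a ! k else w) else (w :: bool))"
  have "(\<lambda>y. H (map (\<lambda>j. snd y j) [0..<n], snd y k)) \<in> TOP \<rightarrow>\<^sub>M count_space UNIV"
    by (rule cs_comp[OF m2])
  moreover have "(\<lambda>y. H (map (\<lambda>j. snd y j) [0..<n], snd y k)) = (\<lambda>y. snd (OP_swap n a b y) k)"
    unfolding H_def OP_swap_def OP_replace_def by (rule ext) simp
  ultimately show "(\<lambda>y. snd (OP_swap n a b y) k) \<in> TOP \<rightarrow>\<^sub>M count_space UNIV" by (simp only:)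
qed


definition Dsh :: "nat \<Rightarrow> bool list \<Rightarrow> bool list \<Rightarrow> (nat \<Rightarrow> bool) \<Rightarrow> int" where
  "Dsh n a b \<alpha> = int (rr n (sw n a b \<alpha>)) - int (rr n \<alpha>)"

lemma Dsh_meas: "(\<lambda>\<alpha>. Dsh n a b \<alpha>) \<in> bernoulli_seq \<rightarrow>\<^sub>M count_space UNIV"
proof -
  have m1: "(\<lambda>\<alpha>. rr n (sw n a b \<alpha>)) \<in> bernoulli_seq \<rightarrow>\<^sub>M count_space UNIV"
    using measurable_comp[OF sw_measurable rr_meas] by (simp add: comp_def)
  have "(\<lambda>\<alpha>. (rr n (sw n a b \<alpha>), rr n \<alpha>)) \<in> bernoulli_seq \<rightarrow>\<^sub>M count_space UNIV"
    by (rule cs_pair[OF m1 rr_meas])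
  from cs_comp[OF this, of "\<lambda>(u, v). int u - int v"] show ?thesis unfolding Dsh_def by simp
qed

definition qext :: "nat \<Rightarrow> bool list \<Rightarrow> nat \<Rightarrow> bool" where
  "qext n q = (\<lambda>i. if i < n then q ! i else False)"

lemma Dsh_prefix:
  assumes "\<alpha> \<in> cyl q" "length q = n"
  shows "Dsh n a b \<alpha> = Dsh n a b (qext n q)"
proof -
  have e: "\<alpha> i = qext n q i" if "i < n" for i using assms that unfolding cyl_iff qext_def by simp
  then have m: "map \<alpha> [0..<n] = map (qext n q) [0..<n]" by simp
  have "sw n a b \<alpha> i = sw n a b (qext n q) i" if "i < n" for i unfolding sw_def m using that by simp
  then have "rr n (sw n a b \<alpha>) = rr n (sw n a b (qext n q))" by (rule rr_cong)
  moreover have "rr n \<alpha> = rr n (qext n q)" using e by (rule rr_cong)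
  ultimately show ?thesis unfolding Dsh_def by simp
qed

lemma cyl_disj: "length q = n \<Longrightarrow> length q' = n \<Longrightarrow> q \<noteq> q' \<Longrightarrow> cyl q \<inter> cyl q' = {}"
  unfolding cyl_def by auto

lemma cyl_cover: "(\<Union>q\<in>{q. length q = n}. cyl q \<inter> S) = S"
proof (intro set_eqI iffI)
  fix \<alpha> assume "\<alpha> \<in> S"
  then show "\<alpha> \<in> (\<Union>q\<in>{q. length q = n}. cyl q \<inter> S)"
    by (intro UN_I[of "map \<alpha> [0..<n]"]) (auto simp: cyl_def)
qed blast

context th2 begin

lemma sig_alt: "sig n a b z = (tpow (Dsh n a b (snd z)) (fst z), sw n a b (snd z))"
  unfolding sig_def Dsh_def ..

lemma sig_meas: "sig n a b \<in> (p \<Otimes>\<^sub>M bernoulli_seq) \<rightarrow>\<^sub>M (p \<Otimes>\<^sub>M bernoulli_seq)"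
  unfolding sig_alt[abs_def]
proof (rule measurable_Pair)
  have f: "(\<lambda>z. tpow r (fst z)) \<in> (p \<Otimes>\<^sub>M bernoulli_seq) \<rightarrow>\<^sub>M p" for r
    using measurable_comp[OF measurable_fst conjunct1[OF tpow_mp[of r]]] by (simp add: comp_def)
  have g: "(\<lambda>z. Dsh n a b (snd z)) \<in> (p \<Otimes>\<^sub>M bernoulli_seq) \<rightarrow>\<^sub>M count_space UNIV"
    using measurable_comp[OF measurable_snd Dsh_meas] by (simp add: comp_def)
  show "(\<lambda>z. tpow (Dsh n a b (snd z)) (fst z)) \<in> (p \<Otimes>\<^sub>M bernoulli_seq) \<rightarrow>\<^sub>M p"
    by (rule measurable_compose_countable[where f="\<lambda>r z. tpow r (fst z)", OF f g])
  show "(\<lambda>z. sw n a b (snd z)) \<in> (p \<Otimes>\<^sub>M bernoulli_seq) \<rightarrow>\<^sub>M bernoulli_seq"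
    using measurable_comp[OF measurable_snd sw_measurable] by (simp add: comp_def)
qed

lemma emeasure_tpow_vimage: "A \<in> sets p \<Longrightarrow> emeasure p (tpow k -` A) = emeasure p A"
proof -
  assume A: "A \<in> sets p"
  have "emeasure (distr p p (tpow k)) A = emeasure p (tpow k -` A \<inter> space p)"
    by (rule emeasure_distr[OF conjunct1[OF tpow_mp] A])
  then show ?thesis using conjunct2[OF tpow_mp[of k]] by simp
qed

lemma emeasure_sw_vimage: "length a = n \<Longrightarrow> length b = n \<Longrightarrow> B \<in> sets bernoulli_seq \<Longrightarrow>
    emeasure bernoulli_seq (sw n a b -` B) = emeasure bernoulli_seq B"
proof -
  assume a: "length a = n" and b: "length b = n" and B: "B \<in> sets bernoulli_seq"
  have "emeasure (distr bernoulli_seq bernoulli_seq (sw n a b)) B = emeasure bernoulli_seq (sw n a b -` B \<inter> space bernoulli_seq)"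
    by (rule emeasure_distr[OF sw_measurable B])
  then show ?thesis using sw_preserving[OF a b] by simp
qed

lemma sig_preserving:
  assumes a: "length a = n" and b: "length b = n"
  shows "distr (p \<Otimes>\<^sub>M bernoulli_seq) (p \<Otimes>\<^sub>M bernoulli_seq) (sig n a b) = p \<Otimes>\<^sub>M bernoulli_seq"
proof -
  interpret p: prob_space p by (rule prob)
  interpret m: prob_space bernoulli_seq by (rule bs_prob)
  have sfp: "sigma_finite_measure p" by unfold_locales
  have sfm: "sigma_finite_measure bernoulli_seq" by unfold_locales
  define Q where "Q = {q :: bool list. length q = n}"
  have fQ: "finite Q" unfolding Q_def by (rule finite_bool_lists)
  have "p \<Otimes>\<^sub>M bernoulli_seq = distr (p \<Otimes>\<^sub>M bernoulli_seq) (p \<Otimes>\<^sub>M bernoulli_seq) (sig n a b)"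
  proof (rule pair_measure_eqI[OF sfp sfm])
    show "sets (p \<Otimes>\<^sub>M bernoulli_seq) = sets (distr (p \<Otimes>\<^sub>M bernoulli_seq) (p \<Otimes>\<^sub>M bernoulli_seq) (sig n a b))"
      by simp
    fix A B assume A: "A \<in> sets p" and B: "B \<in> sets bernoulli_seq"
    define tA where "tA q = tpow (Dsh n a b (qext n q)) -` A" for q
    define R where "R q = tA q \<times> (cyl q \<inter> sw n a b -` B)" for q
    have swB: "sw n a b -` B \<in> sets bernoulli_seq"
      using measurable_sets[OF sw_measurable B] by simp
    have tAs: "tA q \<in> sets p" for q
      unfolding tA_def using measurable_sets[OF conjunct1[OF tpow_mp] A] by simp
    have Rs: "R q \<in> sets (p \<Otimes>\<^sub>M bernoulli_seq)" for q
      unfolding R_def using tAs swB by (intro pair_measureI) auto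
    have vim: "sig n a b -` (A \<times> B) \<inter> space (p \<Otimes>\<^sub>M bernoulli_seq) = (\<Union>q\<in>Q. R q)"
    proof (intro set_eqI iffI)
      fix z assume z: "z \<in> sig n a b -` (A \<times> B) \<inter> space (p \<Otimes>\<^sub>M bernoulli_seq)"
      obtain x \<alpha> where zz: "z = (x, \<alpha>)" by (cases z)
      define q where "q = map \<alpha> [0..<n]"
      have c: "\<alpha> \<in> cyl q" "length q = n" unfolding q_def cyl_def by simp_all
      have "tpow (Dsh n a b \<alpha>) x \<in> A" "sw n a b \<alpha> \<in> B" using z zz unfolding sig_alt by auto
      then have "z \<in> R q" unfolding R_def tA_def zz using Dsh_prefix[OF c] c(1) by simp
      then show "z \<in> (\<Union>q\<in>Q. R q)" using c(2) unfolding Q_def by blast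
    next
      fix z assume "z \<in> (\<Union>q\<in>Q. R q)"
      then obtain q where q: "length q = n" "z \<in> R q" unfolding Q_def by blast
      obtain x \<alpha> where zz: "z = (x, \<alpha>)" by (cases z)
      have c: "\<alpha> \<in> cyl q" using q(2) zz unfolding R_def by simp
      have "tpow (Dsh n a b \<alpha>) x \<in> A" "sw n a b \<alpha> \<in> B"
        using q(2) zz Dsh_prefix[OF c q(1)] unfolding R_def tA_def by simp_all
      then show "z \<in> sig n a b -` (A \<times> B) \<inter> space (p \<Otimes>\<^sub>M bernoulli_seq)"
        unfolding zz sig_alt by (simp add: space_pair_measure)
    qed
    have disj: "disjoint_family_on R Q"
      unfolding disjoint_family_on_def R_def Q_def using cyl_disj by blast
    have "emeasure (distr (p \<Otimes>\<^sub>M bernoulli_seq) (p \<Otimes>\<^sub>M bernoulli_seq) (sig n a b)) (A \<times> B)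
        = emeasure (p \<Otimes>\<^sub>M bernoulli_seq) (\<Union>q\<in>Q. R q)"
      using emeasure_distr[OF sig_meas, of "A \<times> B" n a b] A B vim by simp
    also have "\<dots> = (\<Sum>q\<in>Q. emeasure (p \<Otimes>\<^sub>M bernoulli_seq) (R q))"
    proof -
      have "R ` Q \<subseteq> sets (p \<Otimes>\<^sub>M bernoulli_seq)" using Rs by blast
      from sum_emeasure[OF this disj fQ] show ?thesis by simp
    qed
    also have "\<dots> = (\<Sum>q\<in>Q. emeasure p A * emeasure bernoulli_seq (cyl q \<inter> sw n a b -` B))"
    proof (rule sum.cong[OF refl])
      fix q
      have "emeasure (p \<Otimes>\<^sub>M bernoulli_seq) (R q) = emeasure p (tA q) * emeasure bernoulli_seq (cyl q \<inter> sw n a b -` B)"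
        unfolding R_def by (rule sigma_finite_measure.emeasure_pair_measure_Times[OF sfm tAs]) (use swB in auto)
      also have "emeasure p (tA q) = emeasure p A" unfolding tA_def by (rule emeasure_tpow_vimage[OF A])
      finally show "emeasure (p \<Otimes>\<^sub>M bernoulli_seq) (R q) = emeasure p A * emeasure bernoulli_seq (cyl q \<inter> sw n a b -` B)" .
    qed
    also have "\<dots> = emeasure p A * (\<Sum>q\<in>Q. emeasure bernoulli_seq (cyl q \<inter> sw n a b -` B))"
      by (simp add: sum_distrib_left)
    also have "(\<Sum>q\<in>Q. emeasure bernoulli_seq (cyl q \<inter> sw n a b -` B)) = emeasure bernoulli_seq (\<Union>q\<in>Q. cyl q \<inter> sw n a b -` B)"
    proof (rule sum_emeasure)
      show "(\<lambda>q. cyl q \<inter> sw n a b -` B) ` Q \<subseteq> sets bernoulli_seq" using swB by auto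
      show "disjoint_family_on (\<lambda>q. cyl q \<inter> sw n a b -` B) Q"
        unfolding disjoint_family_on_def Q_def using cyl_disj by blast
    qed (rule fQ)
    also have "(\<Union>q\<in>Q. cyl q \<inter> sw n a b -` B) = sw n a b -` B" unfolding Q_def by (rule cyl_cover)
    also have "emeasure bernoulli_seq (sw n a b -` B) = emeasure bernoulli_seq B"
      by (rule emeasure_sw_vimage[OF a b B])
    finally show "emeasure p A * emeasure bernoulli_seq B = emeasure (distr (p \<Otimes>\<^sub>M bernoulli_seq) (p \<Otimes>\<^sub>M bernoulli_seq) (sig n a b)) (A \<times> B)"
      by simp
  qed
  then show ?thesis by simp
qed

end


lemma fixpoint_sets:
  assumes f: "f \<in> TOP \<rightarrow>\<^sub>M TOP"
  shows "{y \<in> OP_paths. f y = y} \<in> sets TOP"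
proof -
  have ff: "(\<lambda>y. fst (f y) k) \<in> TOP \<rightarrow>\<^sub>M count_space UNIV" for k
    using measurable_comp[OF f meas_fst_TOP] by (simp add: comp_def)
  have fs: "(\<lambda>y. snd (f y) k) \<in> TOP \<rightarrow>\<^sub>M count_space UNIV" for k
    using measurable_comp[OF f meas_snd_TOP] by (simp add: comp_def)
  have s1: "{y \<in> space TOP. fst (f y) k = fst y k} \<in> sets TOP" for k
  proof -
    have "(\<lambda>y. (fst (f y) k, fst y k)) \<in> TOP \<rightarrow>\<^sub>M count_space UNIV" by (rule cs_pair[OF ff meas_fst_TOP])
    from cs_comp[OF this, of "\<lambda>(u, v). u = v"] have "Measurable.pred TOP (\<lambda>y. fst (f y) k = fst y k)" by simp
    then show ?thesis by (simp add: pred_def)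
  qed
  have s2: "{y \<in> space TOP. snd (f y) k = snd y k} \<in> sets TOP" for k
  proof -
    have "(\<lambda>y. (snd (f y) k, snd y k)) \<in> TOP \<rightarrow>\<^sub>M count_space UNIV" by (rule cs_pair[OF fs meas_snd_TOP])
    from cs_comp[OF this, of "\<lambda>(u, v). u = v"] have "Measurable.pred TOP (\<lambda>y. snd (f y) k = snd y k)" by simp
    then show ?thesis by (simp add: pred_def)
  qed
  have "{y \<in> OP_paths. f y = y} = (\<Inter>k. {y \<in> space TOP. fst (f y) k = fst y k}) \<inter> (\<Inter>k. {y \<in> space TOP. snd (f y) k = snd y k})"
    by (auto simp: prod_eq_iff fun_eq_iff)
  also have "\<dots> \<in> sets TOP" using s1 s2 by (intro sets.Int sets.countable_INT) auto
  finally show ?thesis .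
qed

context th2 begin

definition mu :: "op_path measure" where "mu = distr (p \<Otimes>\<^sub>M bernoulli_seq) TOP enc"

lemma sets_mu: "sets mu = sets TOP" unfolding mu_def by simp
lemma space_mu: "space mu = OP_paths" unfolding mu_def by simp

lemma meas_mu_left: "measurable mu N = measurable TOP N"
  by (rule measurable_cong_sets[OF sets_mu refl])
lemma meas_mu_right: "measurable M mu = measurable M TOP"
  by (rule measurable_cong_sets[OF refl sets_mu])

lemma prob_pm: "prob_space (p \<Otimes>\<^sub>M bernoulli_seq)"
proof -
  interpret p: prob_space p by (rule prob)
  interpret m: prob_space bernoulli_seq by (rule bs_prob)
  interpret pair_prob_space p bernoulli_seq ..
  show ?thesis by unfold_locales
qed

lemma null_B0: "emeasure (p \<Otimes>\<^sub>M bernoulli_seq) {z \<in> space (p \<Otimes>\<^sub>M bernoulli_seq). z \<notin> B0} = 0"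
proof -
  have "{z \<in> space (p \<Otimes>\<^sub>M bernoulli_seq). z \<notin> B0} = space (p \<Otimes>\<^sub>M bernoulli_seq) - B0" by blast
  then have "{z \<in> space (p \<Otimes>\<^sub>M bernoulli_seq). z \<notin> B0} \<in> sets (p \<Otimes>\<^sub>M bernoulli_seq)" using B0_sets by auto
  then show ?thesis using AE_iff_measurable[of _ "p \<Otimes>\<^sub>M bernoulli_seq" "\<lambda>z. z \<in> B0"] AE_B0 by simp
qed

lemma distr_enc_mu: "distr (p \<Otimes>\<^sub>M bernoulli_seq) mu enc = mu"
  unfolding mu_def by (rule distr_cong) (simp_all)

lemma mu_swap:
  assumes a: "length a = n" and b: "length b = n"
  shows "OP_swap n a b \<in> mu \<rightarrow>\<^sub>M mu \<and> distr mu mu (OP_swap n a b) = mu"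
proof
  show sm: "OP_swap n a b \<in> mu \<rightarrow>\<^sub>M mu" unfolding meas_mu_left meas_mu_right by (rule swap_meas[OF a b])
  have em: "enc \<in> (p \<Otimes>\<^sub>M bernoulli_seq) \<rightarrow>\<^sub>M mu" unfolding meas_mu_right by (rule enc_meas)
  have sm2: "OP_swap n a b \<in> TOP \<rightarrow>\<^sub>M mu" unfolding meas_mu_right by (rule swap_meas[OF a b])
  have "distr mu mu (OP_swap n a b) = distr (p \<Otimes>\<^sub>M bernoulli_seq) mu (OP_swap n a b \<circ> enc)"
    using distr_distr[OF sm2 enc_meas] unfolding mu_def[symmetric] .
  also have "\<dots> = distr (p \<Otimes>\<^sub>M bernoulli_seq) mu (enc \<circ> sig n a b)"
  proof (rule distr_cong_AE[OF refl refl])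
    show "AE z in p \<Otimes>\<^sub>M bernoulli_seq. (OP_swap n a b \<circ> enc) z = (enc \<circ> sig n a b) z"
      using AE_B0
    proof eventually_elim
      case (elim z)
      obtain x \<alpha> where z: "z = (x, \<alpha>)" by (cases z)
      have "x \<in> X1" using elim z unfolding B0_def using Xg_X1 by auto
      then show ?case unfolding z comp_def by (rule swap_enc[OF _ a b])
    qed
    show "OP_swap n a b \<circ> enc \<in> (p \<Otimes>\<^sub>M bernoulli_seq) \<rightarrow>\<^sub>M mu" using measurable_comp[OF enc_meas sm2] .
    show "enc \<circ> sig n a b \<in> (p \<Otimes>\<^sub>M bernoulli_seq) \<rightarrow>\<^sub>M mu" using measurable_comp[OF sig_meas em] .
  qed
  also have "\<dots> = distr (distr (p \<Otimes>\<^sub>M bernoulli_seq) (p \<Otimes>\<^sub>M bernoulli_seq) (sig n a b)) mu enc"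
    by (rule distr_distr[OF em sig_meas, symmetric])
  also have "\<dots> = mu" unfolding sig_preserving[OF a b] by (rule distr_enc_mu)
  finally show "distr mu mu (OP_swap n a b) = mu" .
qed

lemma mu_central: "central_measure mu"
  unfolding central_measure_def
proof (intro conjI)
  show "prob_space mu" unfolding mu_def by (rule prob_space.prob_space_distr[OF prob_pm enc_meas])
  show "sets mu = sets TOP" by (rule sets_mu)
  show "\<forall>n a b. length a = n \<and> length b = n \<longrightarrow> OP_swap n a b \<in> mu \<rightarrow>\<^sub>M mu \<and> distr mu mu (OP_swap n a b) = mu"
    using mu_swap by blast
qed

definition Aset :: "op_path set" where "Aset = {y \<in> OP_paths. dec y \<in> B0 \<and> enc (dec y) = y}"

lemma Aset_sets: "Aset \<in> sets mu"
proof -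
  have ed: "(\<lambda>y. enc (dec y)) \<in> TOP \<rightarrow>\<^sub>M TOP" using measurable_comp[OF dec_meas enc_meas] by (simp add: comp_def)
  have "{y \<in> OP_paths. dec y \<in> B0} = dec -` B0 \<inter> space TOP" by auto
  also have "\<dots> \<in> sets TOP" by (rule measurable_sets[OF dec_meas B0_sets])
  finally have s1: "{y \<in> OP_paths. dec y \<in> B0} \<in> sets TOP" .
  have "Aset = {y \<in> OP_paths. dec y \<in> B0} \<inter> {y \<in> OP_paths. enc (dec y) = y}" unfolding Aset_def by blast
  also have "\<dots> \<in> sets TOP" using s1 fixpoint_sets[OF ed] by blast
  finally show ?thesis unfolding sets_mu .
qed

lemma mu_iso: "metrically_isomorphic mu adic (p \<Otimes>\<^sub>M bernoulli_seq) (\<lambda>(x, \<alpha>). (T x, odometer \<alpha>))"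
  unfolding metrically_isomorphic_def
proof (intro exI conjI ballI)
  show "Aset \<in> sets mu" by (rule Aset_sets)
  show "B0 \<in> sets (p \<Otimes>\<^sub>M bernoulli_seq)" by (rule B0_sets)
  have nb: "emeasure (p \<Otimes>\<^sub>M bernoulli_seq) (space (p \<Otimes>\<^sub>M bernoulli_seq) - B0) = 0"
    using null_B0 by (simp add: set_diff_eq)
  then show "emeasure (p \<Otimes>\<^sub>M bernoulli_seq) (space (p \<Otimes>\<^sub>M bernoulli_seq) - B0) = 0" .
  have "emeasure mu (space mu - Aset) = emeasure (p \<Otimes>\<^sub>M bernoulli_seq) (enc -` (space mu - Aset) \<inter> space (p \<Otimes>\<^sub>M bernoulli_seq))"
  proof -
    have "OP_paths - Aset \<in> sets TOP" using Aset_sets sets.compl_sets[of Aset TOP] by (simp add: sets_mu)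
    then show ?thesis unfolding mu_def by (simp add: emeasure_distr[OF enc_meas])
  qed
  also have "\<dots> \<le> emeasure (p \<Otimes>\<^sub>M bernoulli_seq) (space (p \<Otimes>\<^sub>M bernoulli_seq) - B0)"
  proof (rule emeasure_mono)
    show "enc -` (space mu - Aset) \<inter> space (p \<Otimes>\<^sub>M bernoulli_seq) \<subseteq> space (p \<Otimes>\<^sub>M bernoulli_seq) - B0"
    proof
      fix z assume z: "z \<in> enc -` (space mu - Aset) \<inter> space (p \<Otimes>\<^sub>M bernoulli_seq)"
      show "z \<in> space (p \<Otimes>\<^sub>M bernoulli_seq) - B0"
      proof (rule ccontr)
        assume "z \<notin> space (p \<Otimes>\<^sub>M bernoulli_seq) - B0"
        then have "z \<in> B0" using z by blast
        then have "enc z \<in> Aset" unfolding Aset_def using dec_enc enc_paths by simp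
        then show False using z by blast
      qed
    qed
    show "space (p \<Otimes>\<^sub>M bernoulli_seq) - B0 \<in> sets (p \<Otimes>\<^sub>M bernoulli_seq)" using B0_sets by auto
  qed
  finally show "emeasure mu (space mu - Aset) = 0" using nb by simp
  have dm: "dec \<in> mu \<rightarrow>\<^sub>M (p \<Otimes>\<^sub>M bernoulli_seq)" unfolding meas_mu_left by (rule dec_meas)
  show "measure_preserving_map mu (p \<Otimes>\<^sub>M bernoulli_seq) dec"
    unfolding measure_preserving_map_def
  proof
    show "dec \<in> mu \<rightarrow>\<^sub>M (p \<Otimes>\<^sub>M bernoulli_seq)" by (rule dm)
    have "distr mu (p \<Otimes>\<^sub>M bernoulli_seq) dec = distr (p \<Otimes>\<^sub>M bernoulli_seq) (p \<Otimes>\<^sub>M bernoulli_seq) (dec \<circ> enc)"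
      unfolding mu_def by (rule distr_distr[OF dec_meas enc_meas])
    also have "\<dots> = distr (p \<Otimes>\<^sub>M bernoulli_seq) (p \<Otimes>\<^sub>M bernoulli_seq) (\<lambda>z. z)"
    proof (rule distr_cong_AE[OF refl refl])
      show "AE z in p \<Otimes>\<^sub>M bernoulli_seq. (dec \<circ> enc) z = z"
        using AE_B0 by eventually_elim (simp add: dec_enc)
      show "dec \<circ> enc \<in> (p \<Otimes>\<^sub>M bernoulli_seq) \<rightarrow>\<^sub>M (p \<Otimes>\<^sub>M bernoulli_seq)"
        by (rule measurable_comp[OF enc_meas dec_meas])
    qed simp
    also have "\<dots> = p \<Otimes>\<^sub>M bernoulli_seq" by simp
    finally show "distr mu (p \<Otimes>\<^sub>M bernoulli_seq) dec = p \<Otimes>\<^sub>M bernoulli_seq" .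
  qed
  show "measure_preserving_map (p \<Otimes>\<^sub>M bernoulli_seq) mu enc"
    unfolding measure_preserving_map_def
  proof
    show "enc \<in> (p \<Otimes>\<^sub>M bernoulli_seq) \<rightarrow>\<^sub>M mu" unfolding meas_mu_right by (rule enc_meas)
    show "distr (p \<Otimes>\<^sub>M bernoulli_seq) mu enc = mu" by (rule distr_enc_mu)
  qed
  fix y assume y: "y \<in> Aset"
  then have db: "dec y \<in> B0" and ed: "enc (dec y) = y" unfolding Aset_def by auto
  show "dec y \<in> B0" by (rule db)
  show "enc (dec y) = y" by (rule ed)
  obtain x \<alpha> where z: "dec y = (x, \<alpha>)" by (cases "dec y")
  have x: "x \<in> X1" and inf: "inf01 \<alpha>" using db z unfolding B0_def using Xg_X1 by auto
  have ex: "\<exists>i. \<not> \<alpha> i" using inf unfolding inf01_def by blast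
  have "adic y = enc (T x, odometer \<alpha>)" using adic_enc[OF x ex] ed z by simp
  moreover have "(T x, odometer \<alpha>) \<in> B0" using B0_TO[OF db] z by simp
  ultimately show "dec (adic y) = (\<lambda>(x, \<alpha>). (T x, odometer \<alpha>)) (dec y)" using dec_enc z by simp
next
  fix z assume z: "z \<in> B0"
  show "enc z \<in> Aset" unfolding Aset_def using dec_enc[OF z] z enc_paths by simp
  show "dec (enc z) = z" by (rule dec_enc[OF z])
qed

end

theorem theorem2:
  fixes p :: "'a::polish_space measure" and T :: "'a \<Rightarrow> 'a" and P :: "'a set"
  assumes "prob_space p"
    and "sets p = sets borel"
    and "mp_automorphism p T"
    and "binomial_generator p T P"
  shows "\<exists>\<mu>. central_measure \<mu> \<and>
           metrically_isomorphic \<mu> adic (p \<Otimes>\<^sub>M bernoulli_seq) (\<lambda>(x, \<alpha>). (T x, odometer \<alpha>))"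
proof -
  have Tmp: "measure_preserving_map p p T" using assms(3) unfolding mp_automorphism_def by blast
  obtain T' where T': "measure_preserving_map p p T'" "AE x in p. T' (T x) = x" "AE x in p. T (T' x) = x"
    "\<forall>B\<in>sets p. \<exists>C\<in>sigma_sets (space p)
              ((\<Union>j. {{x\<in>space p. (T ^^ j) x \<in> P}}) \<union> (\<Union>j. {{x\<in>space p. (T' ^^ j) x \<in> P}})).
            emeasure p ((B - C) \<union> (C - B)) = 0"
    and Pm: "P \<in> sets p"
    using assms(4) unfolding binomial_generator_def by blast
  interpret th2 p T T' P
    by (rule th2.intro[OF assms(1,2) Tmp T'(1) T'(2) T'(3) Pm T'(4)])
  show ?thesis using mu_central mu_iso by blast
qed


end
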